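(* Let $(A,\mathcal N,\mathcal P,\lambda)$ be a game and $(\sigma,\phi)$ a uniform strategy on it such that uniformity is local: for all $x\in\mathrm{Conf}(\sigma)$ and $\alpha\in\mathcal N$, if $\alpha$ fixes $p_\sigma(x)$ then $\phi_\alpha$ fixes $x$. Then $(\sigma,\mathcal S_\phi(\sigma))$, with projection $p_\sigma$, is a $\sim$-strategy on the thin concurrent game $(A,\mathcal S,\mathcal S_+,\mathcal S_-)$, where $\mathcal S_-=\mathcal S_{\mathcal N}(A)$, $\mathcal S_+=\mathcal S_{\mathcal P}(A)$ and $\mathcal S$ is the closure of $\mathcal S_-\cup\mathcal S_+$ under composition.
   Context: Event structure: a set with a partial order $\leq$ with finitely many elements below each element, an irreflexive symmetric hereditary conflict $\#$ (if $a\leq a'$, $a\#b$ then $a'\#b$), and polarity into $\{-,+\}$. Configurations: finite down-closed conflict-free subsets, $\mathrm{Conf}(\cdot)$. $x\subseteq^+y$ (resp. $\subseteq^-$): $x\subseteq y$ with $y\setminus x$ all positive (resp. negative). Map of event structures: polarity-preserving function mapping configurations to configurations and injective on each configuration. A function $h$ fixes a set $x$ if $h(a)=a$ for all $a\in x$. Automorphism: bijection preserving and reflecting $\leq,\#$, polarity; negative if whenever it fixes a configuration $x$ and $x\subseteq^+y$ it fixes $y$; positive likewise with $\subseteq^-$. Group actions are homomorphisms into automorphism groups. A game $(A,\mathcal N,\mathcal P,\lambda)$: $\mathcal N$ a group acting on $A$ by negative automorphisms, $\mathcal P$ by positive automorphisms, $\lambda:\mathcal N\times\mathcal P\to\mathcal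 P\times\mathcal N$ with (i) $\lambda(e,\beta)=(\beta,e)$, $\lambda(\alpha,e)=(e,\alpha)$; (ii) if $\lambda(\alpha',\beta)=(\beta_1,\alpha_1)$, $\lambda(\alpha,\beta_1)=(\beta_2,\alpha_2)$ then $\lambda(\alpha\alpha',\beta)=(\beta_2,\alpha_2\alpha_1)$; (iii) if $\lambda(\alpha,\beta)=(\beta_1,\alpha_1)$, $\lambda(\alpha_1,\beta')=(\beta_2,\alpha_2)$ then $\lambda(\alpha,\beta\beta')=(\beta_1\beta_2,\alpha_2)$; (iv) if $\lambda(\alpha,\beta)=(\beta',\alpha')$ then $\alpha(\beta(a))=\beta'(\alpha'(a))$ for all $a$. For a group $G$ acting on $A$, $\mathcal S_G(A)$ is the set of bijections $x\cong g(x)$ ($x\in\mathrm{Conf}(A)$, $g\in G$) obtained by restricting $g$ to $x$. Strategy on $A$: event structure $\sigma$ with map $p_\sigma:\sigma\to A$ such that for every $x\in\mathrm{Conf}(\sigma)$: if $p_\sigma(x)\subseteq^-z$ there is a unique $y\in\mathrm{Conf}(\sigma)$ with $x\subseteq y$, $p_\sigma(y)=z$; if $z\subseteq^+p_\sigma(x)$ there is $y\subseteq x$ in $\mathrm{Conf}(\sigma)$ with $p_\sigma(y)=z$. Weak map $\sigma\to\tau$: a map $f$ with $f[x]\in\mathcal P$ ($x\in\mathrm{Conf}(\sigma)$) such that $f[x](p_\tau(f(s)))=p_\sigma(s)$ for $s\in x$. $\alpha\cdot\sigma$ is $\sigma$ with projection $\alpha\circ p_\sigma$. Uniform strategy: strategy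 $\sigma$ with weak maps $\phi_\alpha:\alpha\cdot\sigma\to\sigma$ ($\alpha\in\mathcal N$) such that for all $x$: $\phi_e(x)=x$, $\phi_e[x]=e$; and for all $\alpha,\alpha'$, with $y=\phi_\alpha(x)$, $(\gamma,\beta)=\lambda(\alpha',\phi_\alpha[x])$: $\phi_{\alpha'\alpha}(x)=\phi_\beta(y)$ and $\phi_{\alpha'\alpha}[x]=\gamma\,\phi_\beta[y]$. $\mathcal S_\phi(\sigma)$ is the set of bijections $x\cong\phi_\alpha(x)$ obtained by restricting $\phi_\alpha$ to $x\in\mathrm{Conf}(\sigma)$, for $\alpha\in\mathcal N$. For bijections $\theta:x\cong y$, $\theta':x'\cong y'$ between configurations: $\theta\subseteq\theta'$ if $x\subseteq x'$ and $\theta'|_x=\theta$; $\theta\subseteq^{\pm}\theta'$ if moreover $x\subseteq^{\pm}x'$. An isomorphism family on $E$: a set of polarity-preserving bijections between configurations, containing identities, closed under composition and inverse, closed under restriction to subconfigurations, and such that each $\theta:x\cong y$ extends to some $\theta'\supseteq\theta$ in the family on any configuration $x'\supseteq x$. An event structure with symmetry is a pair $(E,\mathcal S_E)$; a map of such $(E,\mathcal S_E)\to(F,\mathcal S_F)$ is a map of event structures $f$ such that for every $\theta:x\cong y$ in $\mathcal S_E$ the bijection $f(a)\mapsto f(\theta(a))$, $f(x)\cong f(y)$, lies in $\mathcal S_F$. A thin concurrent game is an event structure with isomorphism families $\mathcal S,\mathcal S_+,\mathcal S_-$, $\mathcal S_\pm\subseteq\mathcal S$, such that $\mathcal S_+\cap\mathcal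 S_-$ consists of identities, $\theta\in\mathcal S_+$ and $\theta\subseteq^+\theta'\in\mathcal S$ imply $\theta'\in\mathcal S_+$, and $\theta\in\mathcal S_-$ and $\theta\subseteq^-\theta'\in\mathcal S$ imply $\theta'\in\mathcal S_-$. A $\sim$-strategy on a thin concurrent game $(A,\mathcal S,\mathcal S_+,\mathcal S_-)$ is an event structure with symmetry $(\sigma,\mathcal S_\sigma)$ with a map of event structures with symmetry $p:(\sigma,\mathcal S_\sigma)\to(A,\mathcal S)$ that is a strategy on $A$ and satisfies: (thinness) if $x\in\mathrm{Conf}(\sigma)$ and $\mathrm{id}_x\subseteq^+\theta\in\mathcal S_\sigma$ then $\theta=\mathrm{id}_{x'}$ for some $x'$; ($\sim$-receptivity) if $x\subseteq^-y$ and $x\subseteq^-z$ in $\mathrm{Conf}(\sigma)$ and there is $\theta:p(y)\cong p(z)$ in $\mathcal S$ with $\mathrm{id}_{p(x)}\subseteq\theta$, then there is $\chi:y\cong z$ in $\mathcal S_\sigma$ with $\mathrm{id}_x\subseteq\chi$ and $p\chi=\theta$, where $p\chi$ denotes the bijection $p(s)\mapsto p(\chi(s))$. *)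

theory Defs
  imports "HOL-Algebra.Group"
begin

text \<open>An event structure is given by its set of events, the causal order,
  the conflict relation and the polarity (True = positive, False = negative).\<close>

record 'a evstr =
  evs :: "'a set"
  leq :: "'a \<Rightarrow> 'a \<Rightarrow> bool"
  cfl :: "'a \<Rightarrow> 'a \<Rightarrow> bool"
  pol :: "'a \<Rightarrow> bool"

definition is_es :: "'a evstr \<Rightarrow> bool" where
  "is_es E \<longleftrightarrow>
     (\<forall>a\<in>evs E. leq E a a)
   \<and> (\<forall>a\<in>evs E. \<forall>b\<in>evs E. leq E a b \<and> leq E b a \<longrightarrow> a = b)
   \<and> (\<forall>a\<in>evs E. \<forall>b\<in>evs E. \<forall>c\<in>evs E. leq E a b \<and> leq E b c \<longrightarrow> leq E a c)
   \<and> (\<forall>a\<in>evs E. finite {b\<in>evs E. leq E b a})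
   \<and> (\<forall>a\<in>evs E. \<not> cfl E a a)
   \<and> (\<forall>a\<in>evs E. \<forall>b\<in>evs E. cfl E a b \<longrightarrow> cfl E b a)
   \<and> (\<forall>a\<in>evs E. \<forall>a'\<in>evs E. \<forall>b\<in>evs E. leq E a a' \<and> cfl E a b \<longrightarrow> cfl E a' b)"

definition conf :: "'a evstr \<Rightarrow> 'a set \<Rightarrow> bool" where
  "conf E x \<longleftrightarrow> x \<subseteq> evs E \<and> finite x
     \<and> (\<forall>a\<in>x. \<forall>b\<in>evs E. leq E b a \<longrightarrow> b \<in> x)
     \<and> (\<forall>a\<in>x. \<forall>b\<in>x. \<not> cfl E a b)"

definition pos_ext :: "'a evstr \<Rightarrow> 'a set \<Rightarrow> 'a set \<Rightarrow> bool" where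
  "pos_ext E x y \<longleftrightarrow> x \<subseteq> y \<and> (\<forall>a\<in>y - x. pol E a)"

definition neg_ext :: "'a evstr \<Rightarrow> 'a set \<Rightarrow> 'a set \<Rightarrow> bool" where
  "neg_ext E x y \<longleftrightarrow> x \<subseteq> y \<and> (\<forall>a\<in>y - x. \<not> pol E a)"

definition es_map :: "'a evstr \<Rightarrow> 'b evstr \<Rightarrow> ('a \<Rightarrow> 'b) \<Rightarrow> bool" where
  "es_map E F f \<longleftrightarrow>
     (\<forall>a\<in>evs E. pol F (f a) = pol E a)
   \<and> (\<forall>x. conf E x \<longrightarrow> conf F (f ` x) \<and> inj_on f x)"

definition fixes_set :: "('a \<Rightarrow> 'a) \<Rightarrow> 'a set \<Rightarrow> bool" where
  "fixes_set h x \<longleftrightarrow> (\<forall>a\<in>x. h a = a)"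

definition automorphism :: "'a evstr \<Rightarrow> ('a \<Rightarrow> 'a) \<Rightarrow> bool" where
  "automorphism A h \<longleftrightarrow> bij_betw h (evs A) (evs A)
     \<and> (\<forall>a\<in>evs A. \<forall>b\<in>evs A. leq A (h a) (h b) \<longleftrightarrow> leq A a b)
     \<and> (\<forall>a\<in>evs A. \<forall>b\<in>evs A. cfl A (h a) (h b) \<longleftrightarrow> cfl A a b)
     \<and> (\<forall>a\<in>evs A. pol A (h a) = pol A a)"

definition neg_automorphism :: "'a evstr \<Rightarrow> ('a \<Rightarrow> 'a) \<Rightarrow> bool" where
  "neg_automorphism A h \<longleftrightarrow> automorphism A h
     \<and> (\<forall>x y. conf A x \<and> conf A y \<and> fixes_set h x \<and> pos_ext A x y \<longrightarrow> fixes_set h y)"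

definition pos_automorphism :: "'a evstr \<Rightarrow> ('a \<Rightarrow> 'a) \<Rightarrow> bool" where
  "pos_automorphism A h \<longleftrightarrow> automorphism A h
     \<and> (\<forall>x y. conf A x \<and> conf A y \<and> fixes_set h x \<and> neg_ext A x y \<longrightarrow> fixes_set h y)"

definition group_action_by ::
  "('a evstr \<Rightarrow> ('a \<Rightarrow> 'a) \<Rightarrow> bool) \<Rightarrow> 'g monoid \<Rightarrow> 'a evstr \<Rightarrow> ('g \<Rightarrow> 'a \<Rightarrow> 'a) \<Rightarrow> bool" where
  "group_action_by Q G A act \<longleftrightarrow> group G
     \<and> (\<forall>g\<in>carrier G. Q A (act g))
     \<and> (\<forall>a\<in>evs A. act \<one>\<^bsub>G\<^esub> a = a)
     \<and> (\<forall>g\<in>carrier G. \<forall>h\<in>carrier G. \<forall>a\<in>evs A. act (g \<otimes>\<^bsub>G\<^esub> h) a = act g (act h a))"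

definition is_game ::
  "'a evstr \<Rightarrow> 'n monoid \<Rightarrow> ('n \<Rightarrow> 'a \<Rightarrow> 'a) \<Rightarrow> 'p monoid \<Rightarrow> ('p \<Rightarrow> 'a \<Rightarrow> 'a)
   \<Rightarrow> ('n \<Rightarrow> 'p \<Rightarrow> 'p \<times> 'n) \<Rightarrow> bool" where
  "is_game A N actN P actP lam \<longleftrightarrow>
     is_es A
   \<and> group_action_by neg_automorphism N A actN
   \<and> group_action_by pos_automorphism P A actP
   \<and> (\<forall>\<alpha>\<in>carrier N. \<forall>\<beta>\<in>carrier P. fst (lam \<alpha> \<beta>) \<in> carrier P \<and> snd (lam \<alpha> \<beta>) \<in> carrier N)
   \<and> (\<forall>\<beta>\<in>carrier P. lam \<one>\<^bsub>N\<^esub> \<beta> = (\<beta>, \<one>\<^bsub>N\<^esub>))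
   \<and> (\<forall>\<alpha>\<in>carrier N. lam \<alpha> \<one>\<^bsub>P\<^esub> = (\<one>\<^bsub>P\<^esub>, \<alpha>))
   \<and> (\<forall>\<alpha>\<in>carrier N. \<forall>\<alpha>'\<in>carrier N. \<forall>\<beta>\<in>carrier P.
        let (\<beta>1, \<alpha>1) = lam \<alpha>' \<beta>; (\<beta>2, \<alpha>2) = lam \<alpha> \<beta>1
        in lam (\<alpha> \<otimes>\<^bsub>N\<^esub> \<alpha>') \<beta> = (\<beta>2, \<alpha>2 \<otimes>\<^bsub>N\<^esub> \<alpha>1))
   \<and> (\<forall>\<alpha>\<in>carrier N. \<forall>\<beta>\<in>carrier P. \<forall>\<beta>'\<in>carrier P.
        let (\<beta>1, \<alpha>1) = lam \<alpha> \<beta>; (\<beta>2, \<alpha>2) = lam \<alpha>1 \<beta>'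
        in lam \<alpha> (\<beta> \<otimes>\<^bsub>P\<^esub> \<beta>') = (\<beta>1 \<otimes>\<^bsub>P\<^esub> \<beta>2, \<alpha>2))
   \<and> (\<forall>\<alpha>\<in>carrier N. \<forall>\<beta>\<in>carrier P. \<forall>a\<in>evs A.
        let (\<beta>', \<alpha>') = lam \<alpha> \<beta> in actN \<alpha> (actP \<beta> a) = actP \<beta>' (actN \<alpha>' a))"

definition graph_on :: "('a \<Rightarrow> 'b) \<Rightarrow> 'a set \<Rightarrow> ('a \<times> 'b) set" where
  "graph_on f x = {(a, f a) | a. a \<in> x}"

definition pbij :: "'a evstr \<Rightarrow> ('a \<times> 'a) set \<Rightarrow> bool" where
  "pbij E \<theta> \<longleftrightarrow> conf E (Domain \<theta>) \<and> conf E (Range \<theta>)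
     \<and> single_valued \<theta> \<and> single_valued (converse \<theta>)
     \<and> (\<forall>(a, b)\<in>\<theta>. pol E a = pol E b)"

definition bsub :: "('a \<times> 'b) set \<Rightarrow> ('a \<times> 'b) set \<Rightarrow> bool" where
  "bsub \<theta> \<theta>' \<longleftrightarrow> Domain \<theta> \<subseteq> Domain \<theta>' \<and> \<theta>' \<inter> (Domain \<theta> \<times> UNIV) = \<theta>"

definition bsub_pos :: "'a evstr \<Rightarrow> ('a \<times> 'b) set \<Rightarrow> ('a \<times> 'b) set \<Rightarrow> bool" where
  "bsub_pos E \<theta> \<theta>' \<longleftrightarrow> bsub \<theta> \<theta>' \<and> pos_ext E (Domain \<theta>) (Domain \<theta>')"

definition bsub_neg :: "'a evstr \<Rightarrow> ('a \<times> 'b) set \<Rightarrow> ('a \<times> 'b) set \<Rightarrow> bool" where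
  "bsub_neg E \<theta> \<theta>' \<longleftrightarrow> bsub \<theta> \<theta>' \<and> neg_ext E (Domain \<theta>) (Domain \<theta>')"

definition iso_family :: "'a evstr \<Rightarrow> ('a \<times> 'a) set set \<Rightarrow> bool" where
  "iso_family E S \<longleftrightarrow>
     (\<forall>\<theta>\<in>S. pbij E \<theta>)
   \<and> (\<forall>x. conf E x \<longrightarrow> Id_on x \<in> S)
   \<and> (\<forall>\<theta>\<in>S. \<forall>\<theta>'\<in>S. Range \<theta> = Domain \<theta>' \<longrightarrow> \<theta> O \<theta>' \<in> S)
   \<and> (\<forall>\<theta>\<in>S. converse \<theta> \<in> S)
   \<and> (\<forall>\<theta>\<in>S. \<forall>x'. conf E x' \<and> x' \<subseteq> Domain \<theta> \<longrightarrow> \<theta> \<inter> (x' \<times> UNIV) \<in> S)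
   \<and> (\<forall>\<theta>\<in>S. \<forall>x'. conf E x' \<and> Domain \<theta> \<subseteq> x' \<longrightarrow>
        (\<exists>\<theta>'\<in>S. Domain \<theta>' = x' \<and> bsub \<theta> \<theta>'))"

definition es_sym_map ::
  "'a evstr \<Rightarrow> ('a \<times> 'a) set set \<Rightarrow> 'b evstr \<Rightarrow> ('b \<times> 'b) set set \<Rightarrow> ('a \<Rightarrow> 'b) \<Rightarrow> bool" where
  "es_sym_map E SE F SF f \<longleftrightarrow> es_map E F f \<and> (\<forall>\<theta>\<in>SE. map_prod f f ` \<theta> \<in> SF)"

definition thin_cg ::
  "'a evstr \<Rightarrow> ('a \<times> 'a) set set \<Rightarrow> ('a \<times> 'a) set set \<Rightarrow> ('a \<times> 'a) set set \<Rightarrow> bool" where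
  "thin_cg A S Sp Sm \<longleftrightarrow> is_es A
     \<and> iso_family A S \<and> iso_family A Sp \<and> iso_family A Sm
     \<and> Sp \<subseteq> S \<and> Sm \<subseteq> S
     \<and> (\<forall>\<theta>\<in>Sp \<inter> Sm. \<theta> = Id_on (Domain \<theta>))
     \<and> (\<forall>\<theta>\<in>Sp. \<forall>\<theta>'\<in>S. bsub_pos A \<theta> \<theta>' \<longrightarrow> \<theta>' \<in> Sp)
     \<and> (\<forall>\<theta>\<in>Sm. \<forall>\<theta>'\<in>S. bsub_neg A \<theta> \<theta>' \<longrightarrow> \<theta>' \<in> Sm)"

definition S_act :: "'a evstr \<Rightarrow> 'g monoid \<Rightarrow> ('g \<Rightarrow> 'a \<Rightarrow> 'a) \<Rightarrow> ('a \<times> 'a) set set" where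
  "S_act A G act = {graph_on (act g) x | x g. conf A x \<and> g \<in> carrier G}"

inductive_set comp_closure :: "('a \<times> 'a) set set \<Rightarrow> ('a \<times> 'a) set set" for B where
  base: "\<theta> \<in> B \<Longrightarrow> \<theta> \<in> comp_closure B"
| comp: "\<theta> \<in> comp_closure B \<Longrightarrow> \<theta>' \<in> comp_closure B \<Longrightarrow> Range \<theta> = Domain \<theta>'
          \<Longrightarrow> \<theta> O \<theta>' \<in> comp_closure B"

definition is_strategy :: "'s evstr \<Rightarrow> 'a evstr \<Rightarrow> ('s \<Rightarrow> 'a) \<Rightarrow> bool" where
  "is_strategy \<sigma> A p \<longleftrightarrow> is_es \<sigma> \<and> es_map \<sigma> A p
   \<and> (\<forall>x z. conf \<sigma> x \<and> conf A z \<and> neg_ext A (p ` x) z \<longrightarrow>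
        (\<exists>!y. conf \<sigma> y \<and> x \<subseteq> y \<and> p ` y = z))
   \<and> (\<forall>x z. conf \<sigma> x \<and> conf A z \<and> pos_ext A z (p ` x) \<longrightarrow>
        (\<exists>y. conf \<sigma> y \<and> y \<subseteq> x \<and> p ` y = z))"

text \<open>Uniform strategy: \<open>\<phi> \<alpha>\<close> is the weak map $\phi_\alpha$ and \<open>\<phi>b \<alpha> x\<close> is
  $\phi_\alpha[x] \in \mathcal P$.\<close>
definition uniform_strategy ::
  "'a evstr \<Rightarrow> 'n monoid \<Rightarrow> ('n \<Rightarrow> 'a \<Rightarrow> 'a) \<Rightarrow> 'p monoid \<Rightarrow> ('p \<Rightarrow> 'a \<Rightarrow> 'a)
   \<Rightarrow> ('n \<Rightarrow> 'p \<Rightarrow> 'p \<times> 'n) \<Rightarrow> 's evstr \<Rightarrow> ('s \<Rightarrow> 'a)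
   \<Rightarrow> ('n \<Rightarrow> 's \<Rightarrow> 's) \<Rightarrow> ('n \<Rightarrow> 's set \<Rightarrow> 'p) \<Rightarrow> bool" where
  "uniform_strategy A N actN P actP lam \<sigma> p \<phi> \<phi>b \<longleftrightarrow>
     is_strategy \<sigma> A p
   \<and> (\<forall>\<alpha>\<in>carrier N. es_map \<sigma> \<sigma> (\<phi> \<alpha>)
        \<and> (\<forall>x. conf \<sigma> x \<longrightarrow> \<phi>b \<alpha> x \<in> carrier P
             \<and> (\<forall>s\<in>x. actP (\<phi>b \<alpha> x) (p (\<phi> \<alpha> s)) = actN \<alpha> (p s))))
   \<and> (\<forall>x. conf \<sigma> x \<longrightarrow> \<phi> \<one>\<^bsub>N\<^esub> ` x = x \<and> \<phi>b \<one>\<^bsub>N\<^esub> x = \<one>\<^bsub>P\<^esub>)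
   \<and> (\<forall>x. conf \<sigma> x \<longrightarrow> (\<forall>\<alpha>\<in>carrier N. \<forall>\<alpha>'\<in>carrier N.
        let y = \<phi> \<alpha> ` x; (\<gamma>, \<beta>) = lam \<alpha>' (\<phi>b \<alpha> x)
        in \<phi> (\<alpha>' \<otimes>\<^bsub>N\<^esub> \<alpha>) ` x = \<phi> \<beta> ` y
         \<and> \<phi>b (\<alpha>' \<otimes>\<^bsub>N\<^esub> \<alpha>) x = \<gamma> \<otimes>\<^bsub>P\<^esub> \<phi>b \<beta> y))"

definition S_phi :: "'s evstr \<Rightarrow> 'n monoid \<Rightarrow> ('n \<Rightarrow> 's \<Rightarrow> 's) \<Rightarrow> ('s \<times> 's) set set" where
  "S_phi \<sigma> N \<phi> = {graph_on (\<phi> \<alpha>) x | x \<alpha>. conf \<sigma> x \<and> \<alpha> \<in> carrier N}"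

definition sim_strategy ::
  "'a evstr \<Rightarrow> ('a \<times> 'a) set set \<Rightarrow> ('a \<times> 'a) set set \<Rightarrow> ('a \<times> 'a) set set
   \<Rightarrow> 's evstr \<Rightarrow> ('s \<times> 's) set set \<Rightarrow> ('s \<Rightarrow> 'a) \<Rightarrow> bool" where
  "sim_strategy A S Sp Sm \<sigma> S\<sigma> p \<longleftrightarrow>
     thin_cg A S Sp Sm
   \<and> is_es \<sigma> \<and> iso_family \<sigma> S\<sigma>
   \<and> es_sym_map \<sigma> S\<sigma> A S p
   \<and> is_strategy \<sigma> A p
   \<and> (\<forall>x \<theta>. conf \<sigma> x \<and> \<theta> \<in> S\<sigma> \<and> bsub_pos \<sigma> (Id_on x) \<theta> \<longrightarrow> \<theta> = Id_on (Domain \<theta>))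
   \<and> (\<forall>x y z \<theta>. conf \<sigma> x \<and> conf \<sigma> y \<and> conf \<sigma> z \<and> neg_ext \<sigma> x y \<and> neg_ext \<sigma> x z
        \<and> \<theta> \<in> S \<and> Domain \<theta> = p ` y \<and> Range \<theta> = p ` z \<and> bsub (Id_on (p ` x)) \<theta>
        \<longrightarrow> (\<exists>\<chi>\<in>S\<sigma>. Domain \<chi> = y \<and> Range \<chi> = z \<and> bsub (Id_on x) \<chi>
               \<and> map_prod p p ` \<chi> = \<theta>))"

end

theory Submission
  imports Defs
begin

lemma graph_on_Domain[simp]: "Domain (graph_on f x) = x"
  by (auto simp: graph_on_def)

lemma graph_on_Range[simp]: "Range (graph_on f x) = f ` x"
  by (auto simp: graph_on_def)

lemma graph_on_mem[simp]: "(a, b) \<in> graph_on f x \<longleftrightarrow> a \<in> x \<and> b = f a"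
  by (auto simp: graph_on_def)

lemma graph_on_comp: "graph_on f x O graph_on g (f ` x) = graph_on (\<lambda>a. g (f a)) x"
  by (auto simp: graph_on_def)

lemma graph_on_cong: "(\<And>a. a \<in> x \<Longrightarrow> f a = g a) \<Longrightarrow> graph_on f x = graph_on g x"
  by (auto simp: graph_on_def)

lemma graph_on_converse: "(\<And>a. a \<in> x \<Longrightarrow> g (f a) = a) \<Longrightarrow> converse (graph_on f x) = graph_on g (f ` x)"
  by (auto simp: graph_on_def)

lemma graph_on_restr: "graph_on f x \<inter> (x' \<times> UNIV) = graph_on f (x \<inter> x')"
  by (auto simp: graph_on_def)

lemma graph_on_Id: "(\<And>a. a \<in> x \<Longrightarrow> f a = a) \<Longrightarrow> graph_on f x = Id_on x"
  by (auto simp: graph_on_def Id_on_def)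

lemma graph_on_map_prod: "map_prod p p ` graph_on f x = {(p a, p (f a)) | a. a \<in> x}"
  by (auto simp: graph_on_def)

lemma pbij_graph_on:
  assumes "conf E x" "conf E (f ` x)" "inj_on f x" "\<forall>a\<in>x. pol E (f a) = pol E a"
  shows "pbij E (graph_on f x)"
  using assms unfolding pbij_def single_valued_def inj_on_def by auto

lemma pbij_comp:
  assumes "pbij E \<theta>" "pbij E \<theta>'" "Range \<theta> = Domain \<theta>'"
  shows "pbij E (\<theta> O \<theta>')"
proof -
  have d: "Domain (\<theta> O \<theta>') = Domain \<theta>" using assms(3) by blast
  have r: "Range (\<theta> O \<theta>') = Range \<theta>'" using assms(3) by blast
  show ?thesis using assms unfolding pbij_def d r
    by (auto simp: single_valued_relcomp converse_relcomp)
qed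

lemma cc_pbij:
  assumes "iso_family E S1" "iso_family E S2" "\<theta> \<in> comp_closure (S1 \<union> S2)"
  shows "pbij E \<theta>"
  using assms(3)
proof induction
  case (base \<theta>) then show ?case using assms(1,2) unfolding iso_family_def by auto
next
  case (comp \<theta> \<theta>') then show ?case using pbij_comp by blast
qed

lemma cc_converse:
  assumes "iso_family E S1" "iso_family E S2" "\<theta> \<in> comp_closure (S1 \<union> S2)"
  shows "converse \<theta> \<in> comp_closure (S1 \<union> S2)"
  using assms(3)
proof induction
  case (base \<theta>) then show ?case using assms(1,2) unfolding iso_family_def
    by (auto intro: comp_closure.base)
next
  case (comp \<theta> \<theta>') then show ?case
    by (simp add: converse_relcomp comp_closure.comp)
qed

lemma cc_restr:
  assumes "iso_family E S1" "iso_family E S2" "\<theta> \<in> comp_closure (S1 \<union> S2)"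
  shows "\<forall>x'. conf E x' \<and> x' \<subseteq> Domain \<theta> \<longrightarrow> \<theta> \<inter> (x' \<times> UNIV) \<in> comp_closure (S1 \<union> S2)"
  using assms(3)
proof induction
  case (base \<theta>) then show ?case using assms(1,2) unfolding iso_family_def
    by (auto intro: comp_closure.base)
next
  case (comp \<theta> \<theta>')
  show ?case
  proof (intro allI impI)
    fix x' assume x': "conf E x' \<and> x' \<subseteq> Domain (\<theta> O \<theta>')"
    have dd: "Domain (\<theta> O \<theta>') = Domain \<theta>" using comp.hyps(3) by blast
    define \<rho> where "\<rho> = \<theta> \<inter> (x' \<times> UNIV)"
    have \<rho>: "\<rho> \<in> comp_closure (S1 \<union> S2)" using comp.IH(1) x' dd \<rho>_def by auto
    have "pbij E \<rho>" using cc_pbij[OF assms(1,2) \<rho>] .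
    then have c: "conf E (Range \<rho>)" unfolding pbij_def by auto
    have sub: "Range \<rho> \<subseteq> Domain \<theta>'" using comp.hyps(3) \<rho>_def by blast
    define \<rho>' where "\<rho>' = \<theta>' \<inter> (Range \<rho> \<times> UNIV)"
    have \<rho>': "\<rho>' \<in> comp_closure (S1 \<union> S2)" using comp.IH(2) c sub \<rho>'_def by auto
    have rd: "Range \<rho> = Domain \<rho>'" using sub \<rho>'_def by blast
    have eq: "(\<theta> O \<theta>') \<inter> (x' \<times> UNIV) = \<rho> O \<rho>'" unfolding \<rho>_def \<rho>'_def by blast
    show "(\<theta> O \<theta>') \<inter> (x' \<times> UNIV) \<in> comp_closure (S1 \<union> S2)"
      unfolding eq using \<rho> \<rho>' rd by (rule comp_closure.comp)
  qed
qed

lemma cc_ext: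
  assumes "iso_family E S1" "iso_family E S2" "\<theta> \<in> comp_closure (S1 \<union> S2)"
  shows "\<forall>x'. conf E x' \<and> Domain \<theta> \<subseteq> x' \<longrightarrow> (\<exists>\<theta>1\<in>comp_closure (S1 \<union> S2). Domain \<theta>1 = x' \<and> bsub \<theta> \<theta>1)"
  using assms(3)
proof induction
  case (base \<theta>)
  show ?case
  proof (intro allI impI)
    fix x' assume x': "conf E x' \<and> Domain \<theta> \<subseteq> x'"
    from base consider "\<theta> \<in> S1" | "\<theta> \<in> S2" by blast
    then show "\<exists>\<theta>1\<in>comp_closure (S1 \<union> S2). Domain \<theta>1 = x' \<and> bsub \<theta> \<theta>1"
    proof cases
      case 1
      then obtain t where "t \<in> S1" "Domain t = x'" "bsub \<theta> t"
        using assms(1) x' unfolding iso_family_def by blast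
      then show ?thesis by (blast intro: comp_closure.base)
    next
      case 2
      then obtain t where "t \<in> S2" "Domain t = x'" "bsub \<theta> t"
        using assms(2) x' unfolding iso_family_def by blast
      then show ?thesis by (blast intro: comp_closure.base)
    qed
  qed
next
  case (comp \<theta> \<theta>')
  show ?case
  proof (intro allI impI)
    fix x' assume x': "conf E x' \<and> Domain (\<theta> O \<theta>') \<subseteq> x'"
    have dd: "Domain (\<theta> O \<theta>') = Domain \<theta>" using comp.hyps(3) by blast
    obtain \<theta>1 where t1: "\<theta>1 \<in> comp_closure (S1 \<union> S2)" "Domain \<theta>1 = x'" "bsub \<theta> \<theta>1"
      using comp.IH(1) x' dd by auto
    have "pbij E \<theta>1" using cc_pbij[OF assms(1,2) t1(1)] .
    then have c: "conf E (Range \<theta>1)" unfolding pbij_def by auto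
    have "\<theta> \<subseteq> \<theta>1" using t1(3) unfolding bsub_def by blast
    then have sub: "Domain \<theta>' \<subseteq> Range \<theta>1" using comp.hyps(3) by blast
    obtain \<theta>2 where t2: "\<theta>2 \<in> comp_closure (S1 \<union> S2)" "Domain \<theta>2 = Range \<theta>1" "bsub \<theta>' \<theta>2"
      using comp.IH(2) c sub by auto
    have in12: "\<theta>1 O \<theta>2 \<in> comp_closure (S1 \<union> S2)" using t1(1) t2(1) t2(2)[symmetric] by (rule comp_closure.comp)
    have d12: "Domain (\<theta>1 O \<theta>2) = x'" using t2(2) t1(2) by blast
    have b: "bsub (\<theta> O \<theta>') (\<theta>1 O \<theta>2)"
      unfolding bsub_def dd
    proof
      show "Domain \<theta> \<subseteq> Domain (\<theta>1 O \<theta>2)" using d12 x' dd by simp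
      show "\<theta>1 O \<theta>2 \<inter> Domain \<theta> \<times> UNIV = \<theta> O \<theta>'"
      proof
        show "\<theta>1 O \<theta>2 \<inter> Domain \<theta> \<times> UNIV \<subseteq> \<theta> O \<theta>'"
        proof
          fix q assume q: "q \<in> \<theta>1 O \<theta>2 \<inter> Domain \<theta> \<times> UNIV"
          then obtain a b c where abc: "q = (a, c)" "(a, b) \<in> \<theta>1" "(b, c) \<in> \<theta>2" "a \<in> Domain \<theta>" by blast
          have "(a, b) \<in> \<theta>" using t1(3) abc unfolding bsub_def by blast
          moreover then have "b \<in> Domain \<theta>'" using comp.hyps(3) by blast
          then have "(b, c) \<in> \<theta>'" using t2(3) abc unfolding bsub_def by blast
          ultimately show "q \<in> \<theta> O \<theta>'" using abc by blast
        qed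
        show "\<theta> O \<theta>' \<subseteq> \<theta>1 O \<theta>2 \<inter> Domain \<theta> \<times> UNIV"
          using t1(3) t2(3) unfolding bsub_def by blast
      qed
    qed
    show "\<exists>\<theta>1\<in>comp_closure (S1 \<union> S2). Domain \<theta>1 = x' \<and> bsub (\<theta> O \<theta>') \<theta>1"
      using in12 d12 b by blast
  qed
qed

lemma cc_iso:
  assumes "iso_family E S1" "iso_family E S2"
  shows "iso_family E (comp_closure (S1 \<union> S2))"
  unfolding iso_family_def
proof (intro conjI ballI allI impI)
  fix \<theta> assume "\<theta> \<in> comp_closure (S1 \<union> S2)"
  then show "pbij E \<theta>" using cc_pbij assms by blast
next
  fix x assume "conf E x"
  then show "Id_on x \<in> comp_closure (S1 \<union> S2)" using assms(1) unfolding iso_family_def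
    by (auto intro: comp_closure.base)
next
  fix \<theta> \<theta>' assume "\<theta> \<in> comp_closure (S1 \<union> S2)" "\<theta>' \<in> comp_closure (S1 \<union> S2)" "Range \<theta> = Domain \<theta>'"
  then show "\<theta> O \<theta>' \<in> comp_closure (S1 \<union> S2)" by (rule comp_closure.comp)
next
  fix \<theta> assume "\<theta> \<in> comp_closure (S1 \<union> S2)"
  then show "converse \<theta> \<in> comp_closure (S1 \<union> S2)" using cc_converse assms by blast
next
  fix \<theta> x' assume "\<theta> \<in> comp_closure (S1 \<union> S2)" "conf E x' \<and> x' \<subseteq> Domain \<theta>"
  then show "\<theta> \<inter> (x' \<times> UNIV) \<in> comp_closure (S1 \<union> S2)" using cc_restr assms by blast
next
  fix \<theta> x' assume "\<theta> \<in> comp_closure (S1 \<union> S2)" "conf E x' \<and> Domain \<theta> \<subseteq> x'"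
  then show "\<exists>\<theta>'\<in>comp_closure (S1 \<union> S2). Domain \<theta>' = x' \<and> bsub \<theta> \<theta>'" using cc_ext assms by blast
qed


lemma auto_in: "automorphism A h \<Longrightarrow> a \<in> evs A \<Longrightarrow> h a \<in> evs A"
  unfolding automorphism_def bij_betw_def by auto

lemma auto_conf:
  assumes h: "automorphism A h" and x: "conf A x"
  shows "conf A (h ` x)"
proof -
  have bij: "bij_betw h (evs A) (evs A)" and lq: "\<forall>a\<in>evs A. \<forall>b\<in>evs A. leq A (h a) (h b) \<longleftrightarrow> leq A a b"
    and cf: "\<forall>a\<in>evs A. \<forall>b\<in>evs A. cfl A (h a) (h b) \<longleftrightarrow> cfl A a b"
    using h unfolding automorphism_def by auto
  have xs: "x \<subseteq> evs A" "finite x" "\<forall>a\<in>x. \<forall>b\<in>evs A. leq A b a \<longrightarrow> b \<in> x" "\<forall>a\<in>x. \<forall>b\<in>x. \<not> cfl A a b"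
    using x unfolding conf_def by auto
  have "h ` x \<subseteq> evs A" using bij xs(1) unfolding bij_betw_def by auto
  moreover have "finite (h ` x)" using xs(2) by simp
  moreover have "\<forall>a\<in>h ` x. \<forall>b\<in>evs A. leq A b a \<longrightarrow> b \<in> h ` x"
  proof (intro ballI impI)
    fix a b assume a: "a \<in> h ` x" and b: "b \<in> evs A" and l: "leq A b a"
    obtain a' where a': "a' \<in> x" "a = h a'" using a by auto
    obtain b' where b': "b' \<in> evs A" "b = h b'" using b bij unfolding bij_betw_def by auto
    have "leq A b' a'" using lq b' a' xs(1) l by auto
    then have "b' \<in> x" using xs(3) a' b' by auto
    then show "b \<in> h ` x" using b' by auto
  qed
  moreover have "\<forall>a\<in>h ` x. \<forall>b\<in>h ` x. \<not> cfl A a b" using cf xs(1,4) by blast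
  ultimately show ?thesis unfolding conf_def by auto
qed

lemma conf_sub: "conf E x \<Longrightarrow> x \<subseteq> evs E"
  unfolding conf_def by auto

locale gact =
  fixes Q :: "'a evstr \<Rightarrow> ('a \<Rightarrow> 'a) \<Rightarrow> bool" and G :: "'g monoid" and A :: "'a evstr"
    and act :: "'g \<Rightarrow> 'a \<Rightarrow> 'a"
  assumes ga: "group_action_by Q G A act"
    and Qa: "\<And>h. Q A h \<Longrightarrow> automorphism A h"
begin

lemma grp: "group G" using ga unfolding group_action_by_def by (elim conjE) blast

lemma QQ: "g \<in> carrier G \<Longrightarrow> Q A (act g)" using ga unfolding group_action_by_def by (elim conjE) blast

lemma aut: "g \<in> carrier G \<Longrightarrow> automorphism A (act g)" by (rule Qa[OF QQ])

lemma one: "a \<in> evs A \<Longrightarrow> act \<one>\<^bsub>G\<^esub> a = a" using ga unfolding group_action_by_def by (elim conjE) blast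

lemma mult: "g \<in> carrier G \<Longrightarrow> h \<in> carrier G \<Longrightarrow> a \<in> evs A \<Longrightarrow> act (g \<otimes>\<^bsub>G\<^esub> h) a = act g (act h a)"
  using ga unfolding group_action_by_def by (elim conjE) blast

lemma inn: "g \<in> carrier G \<Longrightarrow> a \<in> evs A \<Longrightarrow> act g a \<in> evs A" by (rule auto_in[OF aut])

lemma inv1: "g \<in> carrier G \<Longrightarrow> a \<in> evs A \<Longrightarrow> act (inv\<^bsub>G\<^esub> g) (act g a) = a"
proof -
  assume g: "g \<in> carrier G" and a: "a \<in> evs A"
  have "act (inv\<^bsub>G\<^esub> g) (act g a) = act (inv\<^bsub>G\<^esub> g \<otimes>\<^bsub>G\<^esub> g) a"
    using mult g a grp by (simp add: group.inv_closed)
  also have "\<dots> = a" using g a grp one by (simp add: group.l_inv)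
  finally show ?thesis .
qed

lemma inv2: "g \<in> carrier G \<Longrightarrow> a \<in> evs A \<Longrightarrow> act g (act (inv\<^bsub>G\<^esub> g) a) = a"
proof -
  assume g: "g \<in> carrier G" and a: "a \<in> evs A"
  have "act g (act (inv\<^bsub>G\<^esub> g) a) = act (g \<otimes>\<^bsub>G\<^esub> inv\<^bsub>G\<^esub> g) a"
    using mult g a grp by (simp add: group.inv_closed)
  also have "\<dots> = a" using g a grp one by (simp add: group.r_inv)
  finally show ?thesis .
qed

lemma inj: "g \<in> carrier G \<Longrightarrow> a \<in> evs A \<Longrightarrow> b \<in> evs A \<Longrightarrow> act g a = act g b \<Longrightarrow> a = b"
proof -
  assume h: "g \<in> carrier G" "a \<in> evs A" "b \<in> evs A" "act g a = act g b"
  have "act (inv\<^bsub>G\<^esub> g) (act g a) = act (inv\<^bsub>G\<^esub> g) (act g b)" using h(4) by simp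
  then show "a = b" using inv1 h(1,2,3) by simp
qed

lemma iso: "iso_family A (S_act A G act)"
  unfolding iso_family_def
proof (intro conjI ballI allI impI)
  fix \<theta> assume "\<theta> \<in> S_act A G act"
  then obtain x g where t: "\<theta> = graph_on (act g) x" "conf A x" "g \<in> carrier G" unfolding S_act_def by auto
  have c2: "conf A (act g ` x)" by (rule auto_conf[OF aut[OF t(3)] t(2)])
  have ij: "inj_on (act g) x" unfolding inj_on_def using inj[OF t(3)] conf_sub[OF t(2)] by blast
  have pl: "\<forall>a\<in>x. pol A (act g a) = pol A a"
    using aut[OF t(3)] conf_sub[OF t(2)] unfolding automorphism_def by blast
  show "pbij A \<theta>" unfolding t(1) by (rule pbij_graph_on[OF t(2) c2 ij pl])
next
  fix x assume x: "conf A x"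
  have "Id_on x = graph_on (act \<one>\<^bsub>G\<^esub>) x" using one conf_sub[OF x] by (intro graph_on_Id[symmetric]) auto
  moreover have "\<one>\<^bsub>G\<^esub> \<in> carrier G" using grp by (simp add: monoid.one_closed group.is_monoid)
  ultimately show "Id_on x \<in> S_act A G act" unfolding S_act_def using x by blast
next
  fix \<theta> \<theta>' assume a: "\<theta> \<in> S_act A G act" "\<theta>' \<in> S_act A G act" "Range \<theta> = Domain \<theta>'"
  then obtain x g x' g' where t: "\<theta> = graph_on (act g) x" "conf A x" "g \<in> carrier G"
      "\<theta>' = graph_on (act g') x'" "conf A x'" "g' \<in> carrier G" unfolding S_act_def by blast
  have "x' = act g ` x" using a(3) t by simp
  then have "\<theta> O \<theta>' = graph_on (act g) x O graph_on (act g') (act g ` x)" using t by simp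
  also have "\<dots> = graph_on (\<lambda>a. act g' (act g a)) x" by (rule graph_on_comp)
  also have "\<dots> = graph_on (act (g' \<otimes>\<^bsub>G\<^esub> g)) x"
    using mult[OF t(6) t(3)] conf_sub[OF t(2)] by (intro graph_on_cong) auto
  finally have e: "\<theta> O \<theta>' = graph_on (act (g' \<otimes>\<^bsub>G\<^esub> g)) x" .
  have "g' \<otimes>\<^bsub>G\<^esub> g \<in> carrier G" using t grp by (simp add: monoid.m_closed group.is_monoid)
  then show "\<theta> O \<theta>' \<in> S_act A G act" unfolding S_act_def e using t(2) by blast
next
  fix \<theta> assume "\<theta> \<in> S_act A G act"
  then obtain x g where t: "\<theta> = graph_on (act g) x" "conf A x" "g \<in> carrier G" unfolding S_act_def by auto
  have e: "converse \<theta> = graph_on (act (inv\<^bsub>G\<^esub> g)) (act g ` x)" unfolding t(1)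
    using inv1[OF t(3)] conf_sub[OF t(2)] by (intro graph_on_converse) auto
  have c2: "conf A (act g ` x)" by (rule auto_conf[OF aut[OF t(3)] t(2)])
  have "inv\<^bsub>G\<^esub> g \<in> carrier G" using grp t(3) by (simp add: group.inv_closed)
  then show "converse \<theta> \<in> S_act A G act" unfolding S_act_def e using c2 by blast
next
  fix \<theta> x' assume a: "\<theta> \<in> S_act A G act" "conf A x' \<and> x' \<subseteq> Domain \<theta>"
  then obtain x g where t: "\<theta> = graph_on (act g) x" "conf A x" "g \<in> carrier G" unfolding S_act_def by auto
  have "x \<inter> x' = x'" using a t by auto
  then have "\<theta> \<inter> (x' \<times> UNIV) = graph_on (act g) x'" unfolding t(1) graph_on_restr by simp
  then show "\<theta> \<inter> (x' \<times> UNIV) \<in> S_act A G act" unfolding S_act_def using t a by auto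
next
  fix \<theta> x' assume a: "\<theta> \<in> S_act A G act" "conf A x' \<and> Domain \<theta> \<subseteq> x'"
  then obtain x g where t: "\<theta> = graph_on (act g) x" "conf A x" "g \<in> carrier G" unfolding S_act_def by auto
  have "graph_on (act g) x' \<in> S_act A G act" unfolding S_act_def using t a by auto
  moreover have "bsub \<theta> (graph_on (act g) x')"
  proof -
    have "x \<subseteq> x'" using a t by simp
    then have "x' \<inter> x = x" by auto
    then show ?thesis using \<open>x \<subseteq> x'\<close> unfolding bsub_def t(1) graph_on_restr graph_on_Domain by simp
  qed
  moreover have "Domain (graph_on (act g) x') = x'" by (rule graph_on_Domain)
  ultimately show "\<exists>\<theta>'\<in>S_act A G act. Domain \<theta>' = x' \<and> bsub \<theta> \<theta>'" by blast
qed

end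

lemma es_refl: "is_es E \<Longrightarrow> a \<in> evs E \<Longrightarrow> leq E a a"
  unfolding is_es_def by (elim conjE) blast
lemma es_antisym: "is_es E \<Longrightarrow> a \<in> evs E \<Longrightarrow> b \<in> evs E \<Longrightarrow> leq E a b \<Longrightarrow> leq E b a \<Longrightarrow> a = b"
  unfolding is_es_def by (elim conjE) blast
lemma es_trans: "is_es E \<Longrightarrow> a \<in> evs E \<Longrightarrow> b \<in> evs E \<Longrightarrow> c \<in> evs E \<Longrightarrow> leq E a b \<Longrightarrow> leq E b c \<Longrightarrow> leq E a c"
  unfolding is_es_def by (elim conjE) blast
lemma es_fin: "is_es E \<Longrightarrow> a \<in> evs E \<Longrightarrow> finite {b\<in>evs E. leq E b a}"
  unfolding is_es_def by (elim conjE) blast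

lemma exists_max:
  assumes E: "is_es E" and x: "conf E x" and ne: "x \<noteq> {}"
  shows "\<exists>e\<in>x. conf E (x - {e})"
proof -
  define D where "D a = {b \<in> evs E. leq E b a}" for a
  have fD: "\<And>a. a \<in> evs E \<Longrightarrow> finite (D a)" unfolding D_def by (rule es_fin[OF E])
  have xs: "x \<subseteq> evs E" "finite x" using x unfolding conf_def by auto
  define m where "m = Max ((\<lambda>b. card (D b)) ` x)"
  have "m \<in> (\<lambda>b. card (D b)) ` x" unfolding m_def using xs(2) ne by (intro Max_in) auto
  then obtain e where e1: "e \<in> x" "card (D e) = m" by auto
  have e2: "\<forall>b\<in>x. card (D b) \<le> m" unfolding m_def using xs(2) by auto
  have maxe: "\<forall>b\<in>x. leq E e b \<longrightarrow> b = e"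
  proof (intro ballI impI, rule ccontr)
    fix b assume b: "b \<in> x" "leq E e b" "b \<noteq> e"
    have bE: "b \<in> evs E" and eE: "e \<in> evs E" using b e1 xs by auto
    have "D e \<subseteq> D b" unfolding D_def using es_trans[OF E _ eE bE _ b(2)] by auto
    moreover have "b \<in> D b" using es_refl[OF E bE] bE unfolding D_def by auto
    moreover have "b \<notin> D e" using es_antisym[OF E bE eE] b unfolding D_def by auto
    ultimately have "D e \<subset> D b" by blast
    then have "card (D e) < card (D b)" by (rule psubset_card_mono[OF fD[OF bE]])
    then show False using e1 e2 b by force
  qed
  have "conf E (x - {e})" using x maxe unfolding conf_def by blast
  then show ?thesis using e1 by blast
qed

lemma agree_fix:
  assumes E: "is_es A" and x: "conf A x" and f: "neg_automorphism A f" and g: "pos_automorphism A g"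
    and ag: "\<forall>a\<in>x. f a = g a"
  shows "fixes_set f x"
proof -
  have "\<forall>x. conf A x \<and> card x = n \<and> (\<forall>a\<in>x. f a = g a) \<longrightarrow> fixes_set f x" for n
  proof (induction n)
    case 0
    then show ?case unfolding conf_def fixes_set_def by auto
  next
    case (Suc n)
    show ?case
    proof (intro allI impI)
      fix x assume h: "conf A x \<and> card x = Suc n \<and> (\<forall>a\<in>x. f a = g a)"
      then have "x \<noteq> {}" by auto
      then obtain e where e: "e \<in> x" "conf A (x - {e})" using exists_max E h by blast
      have fin: "finite x" using h unfolding conf_def by auto
      have "card (x - {e}) = n" using h e fin by auto
      then have fx: "fixes_set f (x - {e})" using Suc.IH e h by auto
      have xe: "x - {e} \<union> {e} = x" using e by auto
      show "fixes_set f x"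
      proof (cases "pol A e")
        case True
        then have "pos_ext A (x - {e}) x" unfolding pos_ext_def by auto
        then show ?thesis using f fx e h unfolding neg_automorphism_def by blast
      next
        case False
        then have "neg_ext A (x - {e}) x" unfolding neg_ext_def by auto
        moreover have "fixes_set g (x - {e})" using fx h unfolding fixes_set_def by auto
        ultimately have "fixes_set g x" using g e h unfolding pos_automorphism_def by blast
        then show ?thesis using h unfolding fixes_set_def by auto
      qed
    qed
  qed
  then show ?thesis using x ag by blast
qed


locale mainctx =
  fixes A :: "'a evstr" and N :: "'n monoid" and P :: "'p monoid"
    and actN :: "'n \<Rightarrow> 'a \<Rightarrow> 'a" and actP :: "'p \<Rightarrow> 'a \<Rightarrow> 'a"
    and lam :: "'n \<Rightarrow> 'p \<Rightarrow> 'p \<times> 'n"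
    and \<sigma> :: "'s evstr" and p :: "'s \<Rightarrow> 'a"
    and \<phi> :: "'n \<Rightarrow> 's \<Rightarrow> 's" and \<phi>b :: "'n \<Rightarrow> 's set \<Rightarrow> 'p"
  assumes G: "is_game A N actN P actP lam"
    and U: "uniform_strategy A N actN P actP lam \<sigma> p \<phi> \<phi>b"
    and L: "\<forall>x \<alpha>. conf \<sigma> x \<and> \<alpha> \<in> carrier N \<and> fixes_set (actN \<alpha>) (p ` x)
           \<longrightarrow> fixes_set (\<phi> \<alpha>) x"
begin

lemma esA: "is_es A" using G unfolding is_game_def by (elim conjE)
lemma gaN: "group_action_by neg_automorphism N A actN" using G unfolding is_game_def by (elim conjE)
lemma gaP: "group_action_by pos_automorphism P A actP" using G unfolding is_game_def by (elim conjE)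

sublocale Nn: gact neg_automorphism N A actN
  by (rule gact.intro[OF gaN]) (simp add: neg_automorphism_def)
sublocale Pp: gact pos_automorphism P A actP
  by (rule gact.intro[OF gaP]) (simp add: pos_automorphism_def)

lemma negN: "\<alpha> \<in> carrier N \<Longrightarrow> neg_automorphism A (actN \<alpha>)" by (rule Nn.QQ)
lemma posP: "\<beta> \<in> carrier P \<Longrightarrow> pos_automorphism A (actP \<beta>)" by (rule Pp.QQ)

lemma grpN: "group N" by (rule Nn.grp)
lemma grpP: "group P" by (rule Pp.grp)

lemma lam_cl: "\<alpha> \<in> carrier N \<Longrightarrow> \<beta> \<in> carrier P \<Longrightarrow> lam \<alpha> \<beta> = (\<beta>', \<alpha>') \<Longrightarrow> \<beta>' \<in> carrier P \<and> \<alpha>' \<in> carrier N"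
proof -
  assume h: "\<alpha> \<in> carrier N" "\<beta> \<in> carrier P" "lam \<alpha> \<beta> = (\<beta>', \<alpha>')"
  have "\<forall>\<alpha>\<in>carrier N. \<forall>\<beta>\<in>carrier P. fst (lam \<alpha> \<beta>) \<in> carrier P \<and> snd (lam \<alpha> \<beta>) \<in> carrier N"
    using G unfolding is_game_def by (elim conjE)
  then have "fst (lam \<alpha> \<beta>) \<in> carrier P \<and> snd (lam \<alpha> \<beta>) \<in> carrier N" using h(1,2) by blast
  then show ?thesis using h(3) by simp
qed

lemma lam_1N: "\<beta> \<in> carrier P \<Longrightarrow> lam \<one>\<^bsub>N\<^esub> \<beta> = (\<beta>, \<one>\<^bsub>N\<^esub>)"
proof -
  have "\<forall>\<beta>\<in>carrier P. lam \<one>\<^bsub>N\<^esub> \<beta> = (\<beta>, \<one>\<^bsub>N\<^esub>)" using G unfolding is_game_def by (elim conjE)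
  then show "\<beta> \<in> carrier P \<Longrightarrow> ?thesis" by blast
qed

lemma lam_1P: "\<alpha> \<in> carrier N \<Longrightarrow> lam \<alpha> \<one>\<^bsub>P\<^esub> = (\<one>\<^bsub>P\<^esub>, \<alpha>)"
proof -
  have "\<forall>\<alpha>\<in>carrier N. lam \<alpha> \<one>\<^bsub>P\<^esub> = (\<one>\<^bsub>P\<^esub>, \<alpha>)" using G unfolding is_game_def by (elim conjE)
  then show "\<alpha> \<in> carrier N \<Longrightarrow> ?thesis" by blast
qed

lemma lam_ii:
  assumes "\<alpha> \<in> carrier N" "\<alpha>' \<in> carrier N" "\<beta> \<in> carrier P"
    "lam \<alpha>' \<beta> = (\<beta>1, \<alpha>1)" "lam \<alpha> \<beta>1 = (\<beta>2, \<alpha>2)"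
  shows "lam (\<alpha> \<otimes>\<^bsub>N\<^esub> \<alpha>') \<beta> = (\<beta>2, \<alpha>2 \<otimes>\<^bsub>N\<^esub> \<alpha>1)"
proof -
  have "\<forall>\<alpha>\<in>carrier N. \<forall>\<alpha>'\<in>carrier N. \<forall>\<beta>\<in>carrier P.
        let (\<beta>1, \<alpha>1) = lam \<alpha>' \<beta>; (\<beta>2, \<alpha>2) = lam \<alpha> \<beta>1
        in lam (\<alpha> \<otimes>\<^bsub>N\<^esub> \<alpha>') \<beta> = (\<beta>2, \<alpha>2 \<otimes>\<^bsub>N\<^esub> \<alpha>1)"
    using G unfolding is_game_def by (elim conjE)
  then have "let (\<beta>1, \<alpha>1) = lam \<alpha>' \<beta>; (\<beta>2, \<alpha>2) = lam \<alpha> \<beta>1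
        in lam (\<alpha> \<otimes>\<^bsub>N\<^esub> \<alpha>') \<beta> = (\<beta>2, \<alpha>2 \<otimes>\<^bsub>N\<^esub> \<alpha>1)" using assms(1-3) by blast
  then show ?thesis using assms(4,5) by simp
qed

lemma lam_iii:
  assumes "\<alpha> \<in> carrier N" "\<beta> \<in> carrier P" "\<beta>' \<in> carrier P"
    "lam \<alpha> \<beta> = (\<beta>1, \<alpha>1)" "lam \<alpha>1 \<beta>' = (\<beta>2, \<alpha>2)"
  shows "lam \<alpha> (\<beta> \<otimes>\<^bsub>P\<^esub> \<beta>') = (\<beta>1 \<otimes>\<^bsub>P\<^esub> \<beta>2, \<alpha>2)"
proof -
  have "\<forall>\<alpha>\<in>carrier N. \<forall>\<beta>\<in>carrier P. \<forall>\<beta>'\<in>carrier P.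
        let (\<beta>1, \<alpha>1) = lam \<alpha> \<beta>; (\<beta>2, \<alpha>2) = lam \<alpha>1 \<beta>'
        in lam \<alpha> (\<beta> \<otimes>\<^bsub>P\<^esub> \<beta>') = (\<beta>1 \<otimes>\<^bsub>P\<^esub> \<beta>2, \<alpha>2)"
    using G unfolding is_game_def by (elim conjE)
  then have "let (\<beta>1, \<alpha>1) = lam \<alpha> \<beta>; (\<beta>2, \<alpha>2) = lam \<alpha>1 \<beta>'
        in lam \<alpha> (\<beta> \<otimes>\<^bsub>P\<^esub> \<beta>') = (\<beta>1 \<otimes>\<^bsub>P\<^esub> \<beta>2, \<alpha>2)" using assms(1-3) by blast
  then show ?thesis using assms(4,5) by simp
qed

lemma lam_iv:
  assumes "\<alpha> \<in> carrier N" "\<beta> \<in> carrier P" "lam \<alpha> \<beta> = (\<beta>', \<alpha>')" "a \<in> evs A"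
  shows "actN \<alpha> (actP \<beta> a) = actP \<beta>' (actN \<alpha>' a)"
proof -
  have "\<forall>\<alpha>\<in>carrier N. \<forall>\<beta>\<in>carrier P. \<forall>a\<in>evs A.
        let (\<beta>', \<alpha>') = lam \<alpha> \<beta> in actN \<alpha> (actP \<beta> a) = actP \<beta>' (actN \<alpha>' a)"
    using G unfolding is_game_def by (elim conjE)
  then have "let (\<beta>', \<alpha>') = lam \<alpha> \<beta> in actN \<alpha> (actP \<beta> a) = actP \<beta>' (actN \<alpha>' a)"
    using assms(1,2,4) by blast
  then show ?thesis using assms(3) by simp
qed

lemma snd_right:
  assumes "\<alpha> \<in> carrier N" "\<beta> \<in> carrier P" "\<beta>' \<in> carrier P"
  shows "snd (lam \<alpha> (\<beta> \<otimes>\<^bsub>P\<^esub> \<beta>')) = snd (lam (snd (lam \<alpha> \<beta>)) \<beta>')"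
proof -
  obtain \<beta>1 \<alpha>1 where 1: "lam \<alpha> \<beta> = (\<beta>1, \<alpha>1)" by fastforce
  obtain \<beta>2 \<alpha>2 where 2: "lam \<alpha>1 \<beta>' = (\<beta>2, \<alpha>2)" by fastforce
  show ?thesis using lam_iii[OF assms 1 2] 1 2 by simp
qed

lemma strat: "is_strategy \<sigma> A p" using U unfolding uniform_strategy_def by (elim conjE)
lemma esS: "is_es \<sigma>" using strat unfolding is_strategy_def by (elim conjE)
lemma pmap: "es_map \<sigma> A p" using strat unfolding is_strategy_def by (elim conjE)

lemma phi_facts: "\<alpha> \<in> carrier N \<Longrightarrow> es_map \<sigma> \<sigma> (\<phi> \<alpha>)
        \<and> (\<forall>x. conf \<sigma> x \<longrightarrow> \<phi>b \<alpha> x \<in> carrier P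
             \<and> (\<forall>s\<in>x. actP (\<phi>b \<alpha> x) (p (\<phi> \<alpha> s)) = actN \<alpha> (p s)))"
proof -
  have "\<forall>\<alpha>\<in>carrier N. es_map \<sigma> \<sigma> (\<phi> \<alpha>)
        \<and> (\<forall>x. conf \<sigma> x \<longrightarrow> \<phi>b \<alpha> x \<in> carrier P
             \<and> (\<forall>s\<in>x. actP (\<phi>b \<alpha> x) (p (\<phi> \<alpha> s)) = actN \<alpha> (p s)))"
    using U unfolding uniform_strategy_def by (elim conjE)
  then show "\<alpha> \<in> carrier N \<Longrightarrow> ?thesis" by blast
qed

lemma phimap: "\<alpha> \<in> carrier N \<Longrightarrow> es_map \<sigma> \<sigma> (\<phi> \<alpha>)" using phi_facts by blast
lemma phib: "\<alpha> \<in> carrier N \<Longrightarrow> conf \<sigma> x \<Longrightarrow> \<phi>b \<alpha> x \<in> carrier P" using phi_facts by blast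
lemma phieq: "\<alpha> \<in> carrier N \<Longrightarrow> conf \<sigma> x \<Longrightarrow> s \<in> x \<Longrightarrow> actP (\<phi>b \<alpha> x) (p (\<phi> \<alpha> s)) = actN \<alpha> (p s)"
  using phi_facts by blast

lemma unif:
  assumes "conf \<sigma> x" "\<alpha> \<in> carrier N" "\<alpha>' \<in> carrier N" "lam \<alpha>' (\<phi>b \<alpha> x) = (\<gamma>, \<beta>)"
  shows "\<phi> (\<alpha>' \<otimes>\<^bsub>N\<^esub> \<alpha>) ` x = \<phi> \<beta> ` (\<phi> \<alpha> ` x)
         \<and> \<phi>b (\<alpha>' \<otimes>\<^bsub>N\<^esub> \<alpha>) x = \<gamma> \<otimes>\<^bsub>P\<^esub> \<phi>b \<beta> (\<phi> \<alpha> ` x)"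
proof -
  have "\<forall>x. conf \<sigma> x \<longrightarrow> (\<forall>\<alpha>\<in>carrier N. \<forall>\<alpha>'\<in>carrier N.
        let y = \<phi> \<alpha> ` x; (\<gamma>, \<beta>) = lam \<alpha>' (\<phi>b \<alpha> x)
        in \<phi> (\<alpha>' \<otimes>\<^bsub>N\<^esub> \<alpha>) ` x = \<phi> \<beta> ` y
         \<and> \<phi>b (\<alpha>' \<otimes>\<^bsub>N\<^esub> \<alpha>) x = \<gamma> \<otimes>\<^bsub>P\<^esub> \<phi>b \<beta> y)"
    using U unfolding uniform_strategy_def by (elim conjE)
  then have "let y = \<phi> \<alpha> ` x; (\<gamma>, \<beta>) = lam \<alpha>' (\<phi>b \<alpha> x)
        in \<phi> (\<alpha>' \<otimes>\<^bsub>N\<^esub> \<alpha>) ` x = \<phi> \<beta> ` y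
         \<and> \<phi>b (\<alpha>' \<otimes>\<^bsub>N\<^esub> \<alpha>) x = \<gamma> \<otimes>\<^bsub>P\<^esub> \<phi>b \<beta> y" using assms(1-3) by blast
  then show ?thesis using assms(4) by (simp add: Let_def)
qed

lemma map_conf: "es_map E F f \<Longrightarrow> conf E x \<Longrightarrow> conf F (f ` x)"
  unfolding es_map_def by blast
lemma map_inj: "es_map E F f \<Longrightarrow> conf E x \<Longrightarrow> inj_on f x"
  unfolding es_map_def by blast
lemma map_pol: "es_map E F f \<Longrightarrow> a \<in> evs E \<Longrightarrow> pol F (f a) = pol E a"
  unfolding es_map_def by blast

lemma phi_conf: "\<alpha> \<in> carrier N \<Longrightarrow> conf \<sigma> x \<Longrightarrow> conf \<sigma> (\<phi> \<alpha> ` x)"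
  by (rule map_conf[OF phimap])
lemma p_conf: "conf \<sigma> x \<Longrightarrow> conf A (p ` x)"
  by (rule map_conf[OF pmap])
lemma p_in: "conf \<sigma> x \<Longrightarrow> s \<in> x \<Longrightarrow> p s \<in> evs A"
  using conf_sub[OF p_conf] by blast
lemma phi_in: "\<alpha> \<in> carrier N \<Longrightarrow> conf \<sigma> x \<Longrightarrow> s \<in> x \<Longrightarrow> \<phi> \<alpha> s \<in> \<phi> \<alpha> ` x"
  by blast

lemma phi_p: "\<alpha> \<in> carrier N \<Longrightarrow> conf \<sigma> x \<Longrightarrow> s \<in> x \<Longrightarrow>
   p (\<phi> \<alpha> s) = actP (inv\<^bsub>P\<^esub> (\<phi>b \<alpha> x)) (actN \<alpha> (p s))"
proof -
  assume h: "\<alpha> \<in> carrier N" "conf \<sigma> x" "s \<in> x"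
  have i: "p (\<phi> \<alpha> s) \<in> evs A" using p_in[OF phi_conf[OF h(1,2)]] h(3) by blast
  have "actP (inv\<^bsub>P\<^esub> (\<phi>b \<alpha> x)) (actP (\<phi>b \<alpha> x) (p (\<phi> \<alpha> s))) = p (\<phi> \<alpha> s)"
    by (rule Pp.inv1[OF phib[OF h(1,2)] i])
  then show ?thesis using phieq[OF h] by simp
qed

lemma comp_pt:
  assumes x: "conf \<sigma> x" and a: "\<alpha> \<in> carrier N" and a': "\<alpha>' \<in> carrier N"
    and l: "lam \<alpha>' (\<phi>b \<alpha> x) = (\<gamma>, \<beta>)" and s: "s \<in> x"
  shows "\<phi> (\<alpha>' \<otimes>\<^bsub>N\<^esub> \<alpha>) s = \<phi> \<beta> (\<phi> \<alpha> s)"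
proof -
  define y where "y = \<phi> \<alpha> ` x"
  define b where "b = \<phi>b \<alpha> x"
  have b: "b \<in> carrier P" unfolding b_def by (rule phib[OF a x])
  have gb: "\<gamma> \<in> carrier P" "\<beta> \<in> carrier N" using lam_cl[OF a' b] l b_def by auto
  have y: "conf \<sigma> y" unfolding y_def by (rule phi_conf[OF a x])
  have aa: "\<alpha>' \<otimes>\<^bsub>N\<^esub> \<alpha> \<in> carrier N" using a a' grpN by (simp add: monoid.m_closed group.is_monoid)
  have U1: "\<phi> (\<alpha>' \<otimes>\<^bsub>N\<^esub> \<alpha>) ` x = \<phi> \<beta> ` y" and U2: "\<phi>b (\<alpha>' \<otimes>\<^bsub>N\<^esub> \<alpha>) x = \<gamma> \<otimes>\<^bsub>P\<^esub> \<phi>b \<beta> y"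
    using unif[OF x a a' l] y_def by auto
  define z where "z = \<phi> \<beta> ` y"
  have z: "conf \<sigma> z" unfolding z_def by (rule phi_conf[OF gb(2) y])
  define t1 where "t1 = \<phi> (\<alpha>' \<otimes>\<^bsub>N\<^esub> \<alpha>) s"
  define t2 where "t2 = \<phi> \<beta> (\<phi> \<alpha> s)"
  have sy: "\<phi> \<alpha> s \<in> y" using s y_def by blast
  have t1z: "t1 \<in> z" using s U1 z_def t1_def by blast
  have t2z: "t2 \<in> z" using sy z_def t2_def by blast
  define c where "c = \<phi>b \<beta> y"
  have c: "c \<in> carrier P" unfolding c_def by (rule phib[OF gb(2) y])
  have ps: "p s \<in> evs A" by (rule p_in[OF x s])
  have pt1: "p t1 \<in> evs A" by (rule p_in[OF z t1z])
  have pt2: "p t2 \<in> evs A" by (rule p_in[OF z t2z])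
  have psy: "p (\<phi> \<alpha> s) \<in> evs A" by (rule p_in[OF y sy])
  have e1: "actP (\<gamma> \<otimes>\<^bsub>P\<^esub> c) (p t1) = actN (\<alpha>' \<otimes>\<^bsub>N\<^esub> \<alpha>) (p s)"
    using phieq[OF aa x s] U2 unfolding t1_def c_def by simp
  have e1': "actP \<gamma> (actP c (p t1)) = actN \<alpha>' (actN \<alpha> (p s))"
    using e1 Pp.mult[OF gb(1) c pt1] Nn.mult[OF a' a ps] by simp
  have e2: "actP c (p t2) = actN \<beta> (p (\<phi> \<alpha> s))"
    using phieq[OF gb(2) y sy] unfolding t2_def c_def by simp
  have e3: "actP b (p (\<phi> \<alpha> s)) = actN \<alpha> (p s)"
    using phieq[OF a x s] unfolding b_def by simp
  have e4: "actN \<alpha>' (actP b (p (\<phi> \<alpha> s))) = actP \<gamma> (actN \<beta> (p (\<phi> \<alpha> s)))"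
    using lam_iv[OF a' b _ psy] l b_def by simp
  have "actP \<gamma> (actP c (p t1)) = actP \<gamma> (actP c (p t2))"
    using e1' e2 e3 e4 by simp
  then have "actP c (p t1) = actP c (p t2)"
    using Pp.inj[OF gb(1) Pp.inn[OF c pt1] Pp.inn[OF c pt2]] by simp
  then have "p t1 = p t2" using Pp.inj[OF c pt1 pt2] by simp
  then have "t1 = t2" using map_inj[OF pmap z] t1z t2z unfolding inj_on_def by blast
  then show ?thesis unfolding t1_def t2_def .
qed


lemma inv_cl: "b \<in> carrier P \<Longrightarrow> inv\<^bsub>P\<^esub> b \<in> carrier P" using grpP by (simp add: group.inv_closed)
lemma invN_cl: "a \<in> carrier N \<Longrightarrow> inv\<^bsub>N\<^esub> a \<in> carrier N" using grpN by (simp add: group.inv_closed)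
lemma multN_cl: "a \<in> carrier N \<Longrightarrow> a' \<in> carrier N \<Longrightarrow> a \<otimes>\<^bsub>N\<^esub> a' \<in> carrier N"
  using grpN by (simp add: monoid.m_closed group.is_monoid)
lemma multP_cl: "a \<in> carrier P \<Longrightarrow> a' \<in> carrier P \<Longrightarrow> a \<otimes>\<^bsub>P\<^esub> a' \<in> carrier P"
  using grpP by (simp add: monoid.m_closed group.is_monoid)
lemma oneN_cl: "\<one>\<^bsub>N\<^esub> \<in> carrier N" using grpN by (simp add: monoid.one_closed group.is_monoid)
lemma oneP_cl: "\<one>\<^bsub>P\<^esub> \<in> carrier P" using grpP by (simp add: monoid.one_closed group.is_monoid)

lemma delta_cl: "\<alpha> \<in> carrier N \<Longrightarrow> b \<in> carrier P \<Longrightarrow> snd (lam \<alpha> b) \<in> carrier N"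
  using lam_cl by (metis prod.collapse)

lemma comp_pt2:
  assumes x: "conf \<sigma> x" and a: "\<alpha> \<in> carrier N" and a'': "\<alpha>'' \<in> carrier N" and s: "s \<in> x"
  shows "\<phi> \<alpha>'' (\<phi> \<alpha> s) = \<phi> (snd (lam \<alpha>'' (inv\<^bsub>P\<^esub> (\<phi>b \<alpha> x))) \<otimes>\<^bsub>N\<^esub> \<alpha>) s"
proof -
  define b where "b = \<phi>b \<alpha> x"
  have b: "b \<in> carrier P" unfolding b_def by (rule phib[OF a x])
  define \<delta> where "\<delta> = snd (lam \<alpha>'' (inv\<^bsub>P\<^esub> b))"
  have d: "\<delta> \<in> carrier N" unfolding \<delta>_def by (rule delta_cl[OF a'' inv_cl[OF b]])
  obtain \<gamma> \<beta> where l: "lam \<delta> b = (\<gamma>, \<beta>)" by fastforce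
  have "\<beta> = snd (lam \<delta> b)" using l by simp
  also have "\<dots> = snd (lam \<alpha>'' (inv\<^bsub>P\<^esub> b \<otimes>\<^bsub>P\<^esub> b))" unfolding \<delta>_def
    using snd_right[OF a'' inv_cl[OF b] b] by simp
  also have "\<dots> = \<alpha>''" using grpP b lam_1P[OF a''] by (simp add: group.l_inv)
  finally have be: "\<beta> = \<alpha>''" .
  have "\<phi> (\<delta> \<otimes>\<^bsub>N\<^esub> \<alpha>) s = \<phi> \<beta> (\<phi> \<alpha> s)" using comp_pt[OF x a d _ s] l b_def by simp
  then show ?thesis using be \<delta>_def b_def by simp
qed

lemma phi1: "conf \<sigma> x \<Longrightarrow> s \<in> x \<Longrightarrow> \<phi> \<one>\<^bsub>N\<^esub> s = s"
proof -
  assume x: "conf \<sigma> x" and s: "s \<in> x"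
  have "fixes_set (actN \<one>\<^bsub>N\<^esub>) (p ` x)" unfolding fixes_set_def
    using Nn.one conf_sub[OF p_conf[OF x]] by blast
  then have "fixes_set (\<phi> \<one>\<^bsub>N\<^esub>) x" using L x oneN_cl by blast
  then show ?thesis using s unfolding fixes_set_def by blast
qed

lemma conv_pt:
  assumes x: "conf \<sigma> x" and a: "\<alpha> \<in> carrier N" and s: "s \<in> x"
  shows "\<phi> (snd (lam (inv\<^bsub>N\<^esub> \<alpha>) (\<phi>b \<alpha> x))) (\<phi> \<alpha> s) = s"
proof -
  define b where "b = \<phi>b \<alpha> x"
  have b: "b \<in> carrier P" unfolding b_def by (rule phib[OF a x])
  define a'' where "a'' = snd (lam (inv\<^bsub>N\<^esub> \<alpha>) b)"
  have a'': "a'' \<in> carrier N" unfolding a''_def by (rule delta_cl[OF invN_cl[OF a] b])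
  have "snd (lam a'' (inv\<^bsub>P\<^esub> b)) = snd (lam (inv\<^bsub>N\<^esub> \<alpha>) (b \<otimes>\<^bsub>P\<^esub> inv\<^bsub>P\<^esub> b))"
    unfolding a''_def using snd_right[OF invN_cl[OF a] b inv_cl[OF b]] by simp
  also have "\<dots> = inv\<^bsub>N\<^esub> \<alpha>" using grpP b lam_1P[OF invN_cl[OF a]] by (simp add: group.r_inv)
  finally have e: "snd (lam a'' (inv\<^bsub>P\<^esub> b)) = inv\<^bsub>N\<^esub> \<alpha>" .
  have "\<phi> a'' (\<phi> \<alpha> s) = \<phi> (inv\<^bsub>N\<^esub> \<alpha> \<otimes>\<^bsub>N\<^esub> \<alpha>) s" using comp_pt2[OF x a a'' s] e b_def by simp
  also have "\<dots> = s" using grpN a phi1[OF x s] by (simp add: group.l_inv)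
  finally show ?thesis unfolding a''_def b_def .
qed

lemma Sphi_iso: "iso_family \<sigma> (S_phi \<sigma> N \<phi>)"
  unfolding iso_family_def
proof (intro conjI ballI allI impI)
  fix \<theta> assume "\<theta> \<in> S_phi \<sigma> N \<phi>"
  then obtain x g where t: "\<theta> = graph_on (\<phi> g) x" "conf \<sigma> x" "g \<in> carrier N" unfolding S_phi_def by auto
  have c2: "conf \<sigma> (\<phi> g ` x)" by (rule phi_conf[OF t(3) t(2)])
  have ij: "inj_on (\<phi> g) x" by (rule map_inj[OF phimap[OF t(3)] t(2)])
  have pl: "\<forall>a\<in>x. pol \<sigma> (\<phi> g a) = pol \<sigma> a"
    using map_pol[OF phimap[OF t(3)]] conf_sub[OF t(2)] by blast
  show "pbij \<sigma> \<theta>" unfolding t(1) by (rule pbij_graph_on[OF t(2) c2 ij pl])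
next
  fix x assume x: "conf \<sigma> x"
  have "Id_on x = graph_on (\<phi> \<one>\<^bsub>N\<^esub>) x" using phi1[OF x] by (intro graph_on_Id[symmetric]) auto
  then show "Id_on x \<in> S_phi \<sigma> N \<phi>" unfolding S_phi_def using x oneN_cl by blast
next
  fix \<theta> \<theta>' assume a: "\<theta> \<in> S_phi \<sigma> N \<phi>" "\<theta>' \<in> S_phi \<sigma> N \<phi>" "Range \<theta> = Domain \<theta>'"
  then obtain x g x' g' where t: "\<theta> = graph_on (\<phi> g) x" "conf \<sigma> x" "g \<in> carrier N"
      "\<theta>' = graph_on (\<phi> g') x'" "conf \<sigma> x'" "g' \<in> carrier N" unfolding S_phi_def by blast
  have "x' = \<phi> g ` x" using a(3) t by simp
  then have "\<theta> O \<theta>' = graph_on (\<phi> g) x O graph_on (\<phi> g') (\<phi> g ` x)" using t by simp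
  also have "\<dots> = graph_on (\<lambda>a. \<phi> g' (\<phi> g a)) x" by (rule graph_on_comp)
  also have "\<dots> = graph_on (\<phi> (snd (lam g' (inv\<^bsub>P\<^esub> (\<phi>b g x))) \<otimes>\<^bsub>N\<^esub> g)) x"
    using comp_pt2[OF t(2) t(3) t(6)] by (intro graph_on_cong) auto
  finally have e: "\<theta> O \<theta>' = graph_on (\<phi> (snd (lam g' (inv\<^bsub>P\<^esub> (\<phi>b g x))) \<otimes>\<^bsub>N\<^esub> g)) x" .
  have "snd (lam g' (inv\<^bsub>P\<^esub> (\<phi>b g x))) \<otimes>\<^bsub>N\<^esub> g \<in> carrier N"
    using multN_cl[OF delta_cl[OF t(6) inv_cl[OF phib[OF t(3) t(2)]]] t(3)] .
  then show "\<theta> O \<theta>' \<in> S_phi \<sigma> N \<phi>" unfolding S_phi_def e using t(2) by blast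
next
  fix \<theta> assume "\<theta> \<in> S_phi \<sigma> N \<phi>"
  then obtain x g where t: "\<theta> = graph_on (\<phi> g) x" "conf \<sigma> x" "g \<in> carrier N" unfolding S_phi_def by auto
  have e: "converse \<theta> = graph_on (\<phi> (snd (lam (inv\<^bsub>N\<^esub> g) (\<phi>b g x)))) (\<phi> g ` x)" unfolding t(1)
    using conv_pt[OF t(2) t(3)] by (intro graph_on_converse) auto
  have c2: "conf \<sigma> (\<phi> g ` x)" by (rule phi_conf[OF t(3) t(2)])
  have "snd (lam (inv\<^bsub>N\<^esub> g) (\<phi>b g x)) \<in> carrier N" by (rule delta_cl[OF invN_cl[OF t(3)] phib[OF t(3) t(2)]])
  then show "converse \<theta> \<in> S_phi \<sigma> N \<phi>" unfolding S_phi_def e using c2 by blast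
next
  fix \<theta> x' assume a: "\<theta> \<in> S_phi \<sigma> N \<phi>" "conf \<sigma> x' \<and> x' \<subseteq> Domain \<theta>"
  then obtain x g where t: "\<theta> = graph_on (\<phi> g) x" "conf \<sigma> x" "g \<in> carrier N" unfolding S_phi_def by auto
  have "x \<inter> x' = x'" using a t by auto
  then have "\<theta> \<inter> (x' \<times> UNIV) = graph_on (\<phi> g) x'" unfolding t(1) graph_on_restr by simp
  then show "\<theta> \<inter> (x' \<times> UNIV) \<in> S_phi \<sigma> N \<phi>" unfolding S_phi_def using t a by auto
next
  fix \<theta> x' assume a: "\<theta> \<in> S_phi \<sigma> N \<phi>" "conf \<sigma> x' \<and> Domain \<theta> \<subseteq> x'"
  then obtain x g where t: "\<theta> = graph_on (\<phi> g) x" "conf \<sigma> x" "g \<in> carrier N" unfolding S_phi_def by auto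
  have "graph_on (\<phi> g) x' \<in> S_phi \<sigma> N \<phi>" unfolding S_phi_def using t a by auto
  moreover have "bsub \<theta> (graph_on (\<phi> g) x')"
  proof -
    have "x \<subseteq> x'" using a t by simp
    then have "x' \<inter> x = x" by auto
    then show ?thesis using \<open>x \<subseteq> x'\<close> unfolding bsub_def t(1) graph_on_restr graph_on_Domain by simp
  qed
  moreover have "Domain (graph_on (\<phi> g) x') = x'" by (rule graph_on_Domain)
  ultimately show "\<exists>\<theta>'\<in>S_phi \<sigma> N \<phi>. Domain \<theta>' = x' \<and> bsub \<theta> \<theta>'" by blast
qed


abbreviation "SN \<equiv> S_act A N actN"
abbreviation "SP \<equiv> S_act A P actP"
abbreviation "SS \<equiv> comp_closure (SN \<union> SP)"

lemma SS_iso: "iso_family A SS" by (rule cc_iso[OF Nn.iso Pp.iso])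

lemma PN_form:
  assumes "\<theta> \<in> SS"
  shows "\<exists>x \<alpha> \<beta>. conf A x \<and> \<alpha> \<in> carrier N \<and> \<beta> \<in> carrier P \<and> \<theta> = graph_on (\<lambda>a. actP \<beta> (actN \<alpha> a)) x"
  using assms
proof induction
  case (base \<theta>)
  then consider "\<theta> \<in> SN" | "\<theta> \<in> SP" by blast
  then show ?case
  proof cases
    case 1
    then obtain x g where t: "\<theta> = graph_on (actN g) x" "conf A x" "g \<in> carrier N" unfolding S_act_def by auto
    have "\<theta> = graph_on (\<lambda>a. actP \<one>\<^bsub>P\<^esub> (actN g a)) x" unfolding t(1)
      using Pp.one Nn.inn[OF t(3)] conf_sub[OF t(2)] by (intro graph_on_cong) auto
    then show ?thesis using t oneP_cl by blast
  next
    case 2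
    then obtain x g where t: "\<theta> = graph_on (actP g) x" "conf A x" "g \<in> carrier P" unfolding S_act_def by auto
    have "\<theta> = graph_on (\<lambda>a. actP g (actN \<one>\<^bsub>N\<^esub> a)) x" unfolding t(1)
      using Nn.one conf_sub[OF t(2)] by (intro graph_on_cong) auto
    then show ?thesis using t oneN_cl by blast
  qed
next
  case (comp \<theta> \<theta>')
  obtain x1 \<alpha>1 \<beta>1 where t1: "conf A x1" "\<alpha>1 \<in> carrier N" "\<beta>1 \<in> carrier P" "\<theta> = graph_on (\<lambda>a. actP \<beta>1 (actN \<alpha>1 a)) x1"
    using comp.IH(1) by blast
  obtain x2 \<alpha>2 \<beta>2 where t2: "conf A x2" "\<alpha>2 \<in> carrier N" "\<beta>2 \<in> carrier P" "\<theta>' = graph_on (\<lambda>a. actP \<beta>2 (actN \<alpha>2 a)) x2"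
    using comp.IH(2) by blast
  have x2: "x2 = (\<lambda>a. actP \<beta>1 (actN \<alpha>1 a)) ` x1" using comp.hyps(3) t1(4) t2(4) by simp
  obtain \<beta>' \<alpha>' where l: "lam \<alpha>2 \<beta>1 = (\<beta>', \<alpha>')" by fastforce
  have cl: "\<beta>' \<in> carrier P" "\<alpha>' \<in> carrier N" using lam_cl[OF t2(2) t1(3) l] by auto
  have "\<theta> O \<theta>' = graph_on (\<lambda>a. actP \<beta>2 (actN \<alpha>2 (actP \<beta>1 (actN \<alpha>1 a)))) x1"
    unfolding t1(4) t2(4) x2 graph_on_comp by simp
  also have "\<dots> = graph_on (\<lambda>a. actP (\<beta>2 \<otimes>\<^bsub>P\<^esub> \<beta>') (actN (\<alpha>' \<otimes>\<^bsub>N\<^esub> \<alpha>1) a)) x1"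
  proof (rule graph_on_cong)
    fix a assume a: "a \<in> x1"
    have ae: "a \<in> evs A" using a conf_sub[OF t1(1)] by blast
    have ne: "actN \<alpha>1 a \<in> evs A" by (rule Nn.inn[OF t1(2) ae])
    have "actN \<alpha>2 (actP \<beta>1 (actN \<alpha>1 a)) = actP \<beta>' (actN \<alpha>' (actN \<alpha>1 a))"
      by (rule lam_iv[OF t2(2) t1(3) l ne])
    then show "actP \<beta>2 (actN \<alpha>2 (actP \<beta>1 (actN \<alpha>1 a))) = actP (\<beta>2 \<otimes>\<^bsub>P\<^esub> \<beta>') (actN (\<alpha>' \<otimes>\<^bsub>N\<^esub> \<alpha>1) a)"
      using Pp.mult[OF t2(3) cl(1) Nn.inn[OF cl(2) ne]] Nn.mult[OF cl(2) t1(2) ae] by simp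
  qed
  finally show ?case using t1(1) multN_cl[OF cl(2) t1(2)] multP_cl[OF t2(3) cl(1)] by blast
qed

lemma NP_form:
  assumes "\<theta> \<in> SS"
  shows "\<exists>x \<alpha> \<beta>. conf A x \<and> \<alpha> \<in> carrier N \<and> \<beta> \<in> carrier P \<and> \<theta> = graph_on (\<lambda>a. actN \<alpha> (actP \<beta> a)) x"
proof -
  have "converse \<theta> \<in> SS" using SS_iso assms unfolding iso_family_def by blast
  then obtain y \<alpha> \<beta> where t: "conf A y" "\<alpha> \<in> carrier N" "\<beta> \<in> carrier P"
    "converse \<theta> = graph_on (\<lambda>a. actP \<beta> (actN \<alpha> a)) y" using PN_form by blast
  have "\<theta> = converse (converse \<theta>)" by simp
  also have "\<dots> = graph_on (\<lambda>a. actN (inv\<^bsub>N\<^esub> \<alpha>) (actP (inv\<^bsub>P\<^esub> \<beta>) a)) ((\<lambda>a. actP \<beta> (actN \<alpha> a)) ` y)"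
    unfolding t(4)
  proof (rule graph_on_converse)
    fix a assume "a \<in> y"
    then have ae: "a \<in> evs A" using conf_sub[OF t(1)] by blast
    show "actN (inv\<^bsub>N\<^esub> \<alpha>) (actP (inv\<^bsub>P\<^esub> \<beta>) (actP \<beta> (actN \<alpha> a))) = a"
      using Pp.inv1[OF t(3) Nn.inn[OF t(2) ae]] Nn.inv1[OF t(2) ae] by simp
  qed
  finally have e: "\<theta> = graph_on (\<lambda>a. actN (inv\<^bsub>N\<^esub> \<alpha>) (actP (inv\<^bsub>P\<^esub> \<beta>) a)) ((\<lambda>a. actP \<beta> (actN \<alpha> a)) ` y)" .
  have "(\<lambda>a. actP \<beta> (actN \<alpha> a)) ` y = actP \<beta> ` (actN \<alpha> ` y)" by (simp add: image_image)
  moreover have "conf A (actP \<beta> ` (actN \<alpha> ` y))"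
    by (rule auto_conf[OF Pp.aut[OF t(3)] auto_conf[OF Nn.aut[OF t(2)] t(1)]])
  ultimately show ?thesis using e invN_cl[OF t(2)] inv_cl[OF t(3)] by metis
qed

lemma PN_in_S:
  assumes x: "conf A x" and a: "\<alpha> \<in> carrier N" and b: "\<beta> \<in> carrier P"
  shows "graph_on (\<lambda>a. actP \<beta> (actN \<alpha> a)) x \<in> SS"
proof -
  have 1: "graph_on (actN \<alpha>) x \<in> SS" using x a unfolding S_act_def by (blast intro: comp_closure.base)
  have c: "conf A (actN \<alpha> ` x)" by (rule auto_conf[OF Nn.aut[OF a] x])
  have 2: "graph_on (actP \<beta>) (actN \<alpha> ` x) \<in> SS" using c b unfolding S_act_def by (blast intro: comp_closure.base)
  have "graph_on (actN \<alpha>) x O graph_on (actP \<beta>) (actN \<alpha> ` x) \<in> SS"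
    by (rule comp_closure.comp[OF 1 2]) simp
  then show ?thesis unfolding graph_on_comp .
qed

lemma neg_fix_ext: "neg_automorphism A f \<Longrightarrow> conf A x \<Longrightarrow> conf A x' \<Longrightarrow> fixes_set f x \<Longrightarrow> pos_ext A x x' \<Longrightarrow> fixes_set f x'"
  unfolding neg_automorphism_def by blast
lemma pos_fix_ext: "pos_automorphism A f \<Longrightarrow> conf A x \<Longrightarrow> conf A x' \<Longrightarrow> fixes_set f x \<Longrightarrow> neg_ext A x x' \<Longrightarrow> fixes_set f x'"
  unfolding pos_automorphism_def by blast

lemma thin: "thin_cg A SS SP SN"
  unfolding thin_cg_def
proof (intro conjI ballI impI)
  show "is_es A" by (rule esA)
  show "iso_family A SS" by (rule SS_iso)
  show "iso_family A SP" by (rule Pp.iso)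
  show "iso_family A SN" by (rule Nn.iso)
  show "SP \<subseteq> SS" by (blast intro: comp_closure.base)
  show "SN \<subseteq> SS" by (blast intro: comp_closure.base)
next
  fix \<theta> assume h: "\<theta> \<in> SP \<inter> SN"
  then obtain x \<beta> where t: "\<theta> = graph_on (actP \<beta>) x" "conf A x" "\<beta> \<in> carrier P" unfolding S_act_def by auto
  obtain x' \<alpha> where t': "\<theta> = graph_on (actN \<alpha>) x'" "conf A x'" "\<alpha> \<in> carrier N" using h unfolding S_act_def by auto
  have xx: "x' = x" using t t' by (metis graph_on_Domain)
  have ag: "\<forall>a\<in>x. actN \<alpha> a = actP \<beta> a"
  proof
    fix a assume "a \<in> x"
    then have "(a, actP \<beta> a) \<in> graph_on (actN \<alpha>) x" using t t' xx by simp
    then show "actN \<alpha> a = actP \<beta> a" by simp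
  qed
  have "fixes_set (actN \<alpha>) x" by (rule agree_fix[OF esA t(2) negN[OF t'(3)] posP[OF t(3)] ag])
  then have "\<theta> = Id_on x" unfolding t' xx fixes_set_def by (intro graph_on_Id) auto
  then show "\<theta> = Id_on (Domain \<theta>)" by simp
next
  fix \<theta> \<theta>' assume h: "\<theta> \<in> SP" "\<theta>' \<in> SS" "bsub_pos A \<theta> \<theta>'"
  obtain x \<beta> where t: "\<theta> = graph_on (actP \<beta>) x" "conf A x" "\<beta> \<in> carrier P" using h(1) unfolding S_act_def by auto
  obtain x' \<alpha>' \<beta>' where t': "conf A x'" "\<alpha>' \<in> carrier N" "\<beta>' \<in> carrier P"
      "\<theta>' = graph_on (\<lambda>a. actP \<beta>' (actN \<alpha>' a)) x'" using PN_form[OF h(2)] by blast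
  have sub: "x \<subseteq> x'" and eq: "\<theta>' \<inter> (x \<times> UNIV) = \<theta>" and pe: "pos_ext A x x'"
    using h(3) t t' unfolding bsub_pos_def bsub_def by auto
  have ag: "\<forall>a\<in>x. actN \<alpha>' a = actP (inv\<^bsub>P\<^esub> \<beta>' \<otimes>\<^bsub>P\<^esub> \<beta>) a"
  proof
    fix a assume a: "a \<in> x"
    have ae: "a \<in> evs A" using a conf_sub[OF t(2)] by blast
    have "(a, actP \<beta>' (actN \<alpha>' a)) \<in> \<theta>'" using a sub t'(4) by auto
    then have "(a, actP \<beta>' (actN \<alpha>' a)) \<in> \<theta>" using eq a by blast
    then have "actP \<beta>' (actN \<alpha>' a) = actP \<beta> a" using t(1) by simp
    then have "actP (inv\<^bsub>P\<^esub> \<beta>') (actP \<beta>' (actN \<alpha>' a)) = actP (inv\<^bsub>P\<^esub> \<beta>') (actP \<beta> a)" by simp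
    then show "actN \<alpha>' a = actP (inv\<^bsub>P\<^esub> \<beta>' \<otimes>\<^bsub>P\<^esub> \<beta>) a"
      using Pp.inv1[OF t'(3) Nn.inn[OF t'(2) ae]] Pp.mult[OF inv_cl[OF t'(3)] t(3) ae] by simp
  qed
  have "fixes_set (actN \<alpha>') x"
    by (rule agree_fix[OF esA t(2) negN[OF t'(2)] posP[OF multP_cl[OF inv_cl[OF t'(3)] t(3)]] ag])
  then have "fixes_set (actN \<alpha>') x'" by (rule neg_fix_ext[OF negN[OF t'(2)] t(2) t'(1) _ pe])
  then have "\<theta>' = graph_on (actP \<beta>') x'" unfolding t'(4) fixes_set_def by (intro graph_on_cong) auto
  then show "\<theta>' \<in> SP" unfolding S_act_def using t'(1,3) by blast
next
  fix \<theta> \<theta>' assume h: "\<theta> \<in> SN" "\<theta>' \<in> SS" "bsub_neg A \<theta> \<theta>'"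
  obtain x \<alpha> where t: "\<theta> = graph_on (actN \<alpha>) x" "conf A x" "\<alpha> \<in> carrier N" using h(1) unfolding S_act_def by auto
  obtain x' \<alpha>' \<beta>' where t': "conf A x'" "\<alpha>' \<in> carrier N" "\<beta>' \<in> carrier P"
      "\<theta>' = graph_on (\<lambda>a. actN \<alpha>' (actP \<beta>' a)) x'" using NP_form[OF h(2)] by blast
  have sub: "x \<subseteq> x'" and eq: "\<theta>' \<inter> (x \<times> UNIV) = \<theta>" and pe: "neg_ext A x x'"
    using h(3) t t' unfolding bsub_neg_def bsub_def by auto
  have ag: "\<forall>a\<in>x. actN (inv\<^bsub>N\<^esub> \<alpha>' \<otimes>\<^bsub>N\<^esub> \<alpha>) a = actP \<beta>' a"
  proof
    fix a assume a: "a \<in> x"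
    have ae: "a \<in> evs A" using a conf_sub[OF t(2)] by blast
    have "(a, actN \<alpha>' (actP \<beta>' a)) \<in> \<theta>'" using a sub t'(4) by auto
    then have "(a, actN \<alpha>' (actP \<beta>' a)) \<in> \<theta>" using eq a by blast
    then have "actN \<alpha>' (actP \<beta>' a) = actN \<alpha> a" using t(1) by simp
    then have "actN (inv\<^bsub>N\<^esub> \<alpha>') (actN \<alpha>' (actP \<beta>' a)) = actN (inv\<^bsub>N\<^esub> \<alpha>') (actN \<alpha> a)" by simp
    then show "actN (inv\<^bsub>N\<^esub> \<alpha>' \<otimes>\<^bsub>N\<^esub> \<alpha>) a = actP \<beta>' a"
      using Nn.inv1[OF t'(2) Pp.inn[OF t'(3) ae]] Nn.mult[OF invN_cl[OF t'(2)] t(3) ae] by simp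
  qed
  have "fixes_set (actN (inv\<^bsub>N\<^esub> \<alpha>' \<otimes>\<^bsub>N\<^esub> \<alpha>)) x"
    by (rule agree_fix[OF esA t(2) negN[OF multN_cl[OF invN_cl[OF t'(2)] t(3)]] posP[OF t'(3)] ag])
  then have "fixes_set (actP \<beta>') x" using ag unfolding fixes_set_def by simp
  then have "fixes_set (actP \<beta>') x'" by (rule pos_fix_ext[OF posP[OF t'(3)] t(2) t'(1) _ pe])
  then have "\<theta>' = graph_on (actN \<alpha>') x'" unfolding t'(4) fixes_set_def by (intro graph_on_cong) auto
  then show "\<theta>' \<in> SN" unfolding S_act_def using t'(1,2) by blast
qed


lemma neg_ext_p:
  assumes y: "conf \<sigma> y" and e: "neg_ext \<sigma> x y" shows "neg_ext A (p ` x) (p ` y)"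
proof -
  have 1: "x \<subseteq> y" and 2: "\<forall>a\<in>y - x. \<not> pol \<sigma> a" using e unfolding neg_ext_def by auto
  have "\<forall>a\<in>p ` y - p ` x. \<not> pol A a"
  proof
    fix a assume a: "a \<in> p ` y - p ` x"
    then obtain s where s: "s \<in> y" "a = p s" by auto
    have "s \<notin> x" using a s by blast
    then have "\<not> pol \<sigma> s" using 2 s by blast
    moreover have "s \<in> evs \<sigma>" using conf_sub[OF y] s by blast
    ultimately show "\<not> pol A a" using map_pol[OF pmap] s by simp
  qed
  then show ?thesis using 1 unfolding neg_ext_def by blast
qed
lemma pos_ext_p:
  assumes y: "conf \<sigma> y" and e: "pos_ext \<sigma> x y" shows "pos_ext A (p ` x) (p ` y)"
proof -
  have 1: "x \<subseteq> y" and 2: "\<forall>a\<in>y - x. pol \<sigma> a" using e unfolding pos_ext_def by auto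
  have "\<forall>a\<in>p ` y - p ` x. pol A a"
  proof
    fix a assume a: "a \<in> p ` y - p ` x"
    then obtain s where s: "s \<in> y" "a = p s" by auto
    have "s \<notin> x" using a s by blast
    then have "pol \<sigma> s" using 2 s by blast
    moreover have "s \<in> evs \<sigma>" using conf_sub[OF y] s by blast
    ultimately show "pol A a" using map_pol[OF pmap] s by simp
  qed
  then show ?thesis using 1 unfolding pos_ext_def by blast
qed

lemma strat_recv: "conf \<sigma> x \<Longrightarrow> conf A z \<Longrightarrow> neg_ext A (p ` x) z \<Longrightarrow> \<exists>!y. conf \<sigma> y \<and> x \<subseteq> y \<and> p ` y = z"
proof -
  have "\<forall>x z. conf \<sigma> x \<and> conf A z \<and> neg_ext A (p ` x) z \<longrightarrow>
        (\<exists>!y. conf \<sigma> y \<and> x \<subseteq> y \<and> p ` y = z)" using strat unfolding is_strategy_def by (elim conjE)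
  then show "conf \<sigma> x \<Longrightarrow> conf A z \<Longrightarrow> neg_ext A (p ` x) z \<Longrightarrow> ?thesis" by blast
qed

lemma sym_map: "es_sym_map \<sigma> (S_phi \<sigma> N \<phi>) A SS p"
  unfolding es_sym_map_def
proof (intro conjI ballI)
  show "es_map \<sigma> A p" by (rule pmap)
next
  fix \<theta> assume "\<theta> \<in> S_phi \<sigma> N \<phi>"
  then obtain x \<alpha> where t: "\<theta> = graph_on (\<phi> \<alpha>) x" "conf \<sigma> x" "\<alpha> \<in> carrier N" unfolding S_phi_def by auto
  define b where "b = \<phi>b \<alpha> x"
  have b: "b \<in> carrier P" unfolding b_def by (rule phib[OF t(3) t(2)])
  have "map_prod p p ` \<theta> = graph_on (\<lambda>a. actP (inv\<^bsub>P\<^esub> b) (actN \<alpha> a)) (p ` x)"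
  proof
    show "map_prod p p ` \<theta> \<subseteq> graph_on (\<lambda>a. actP (inv\<^bsub>P\<^esub> b) (actN \<alpha> a)) (p ` x)"
    proof
      fix q assume "q \<in> map_prod p p ` \<theta>"
      then obtain s where s: "s \<in> x" "q = (p s, p (\<phi> \<alpha> s))" unfolding t(1) graph_on_def by auto
      show "q \<in> graph_on (\<lambda>a. actP (inv\<^bsub>P\<^esub> b) (actN \<alpha> a)) (p ` x)"
        using s phi_p[OF t(3) t(2) s(1)] b_def by simp
    qed
    show "graph_on (\<lambda>a. actP (inv\<^bsub>P\<^esub> b) (actN \<alpha> a)) (p ` x) \<subseteq> map_prod p p ` \<theta>"
    proof
      fix q assume "q \<in> graph_on (\<lambda>a. actP (inv\<^bsub>P\<^esub> b) (actN \<alpha> a)) (p ` x)"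
      then obtain s where s: "s \<in> x" "q = (p s, actP (inv\<^bsub>P\<^esub> b) (actN \<alpha> (p s)))" unfolding graph_on_def by auto
      have "q = map_prod p p (s, \<phi> \<alpha> s)" using s phi_p[OF t(3) t(2) s(1)] b_def by simp
      moreover have "(s, \<phi> \<alpha> s) \<in> \<theta>" using t(1) s by simp
      ultimately show "q \<in> map_prod p p ` \<theta>" by blast
    qed
  qed
  then show "map_prod p p ` \<theta> \<in> SS" using PN_in_S[OF p_conf[OF t(2)] t(3) inv_cl[OF b]] by simp
qed

lemma thinness:
  assumes x: "conf \<sigma> x" and th: "\<theta> \<in> S_phi \<sigma> N \<phi>" and bp: "bsub_pos \<sigma> (Id_on x) \<theta>"
  shows "\<theta> = Id_on (Domain \<theta>)"
proof -
  obtain x' \<alpha> where t: "\<theta> = graph_on (\<phi> \<alpha>) x'" "conf \<sigma> x'" "\<alpha> \<in> carrier N" using th unfolding S_phi_def by auto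
  have sub: "x \<subseteq> x'" and eq: "\<theta> \<inter> (x \<times> UNIV) = Id_on x" and pe: "pos_ext \<sigma> x x'"
    using bp t unfolding bsub_pos_def bsub_def by auto
  have fx: "\<forall>s\<in>x. \<phi> \<alpha> s = s"
  proof
    fix s assume s: "s \<in> x"
    have "(s, \<phi> \<alpha> s) \<in> \<theta>" using t(1) s sub by auto
    then have "(s, \<phi> \<alpha> s) \<in> Id_on x" using eq s by blast
    then show "\<phi> \<alpha> s = s" by auto
  qed
  define b where "b = \<phi>b \<alpha> x'"
  have b: "b \<in> carrier P" unfolding b_def by (rule phib[OF t(3) t(2)])
  have ag: "\<forall>a\<in>p ` x. actN \<alpha> a = actP b a"
  proof
    fix a assume "a \<in> p ` x"
    then obtain s where s: "s \<in> x" "a = p s" by auto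
    have "actP b (p (\<phi> \<alpha> s)) = actN \<alpha> (p s)" unfolding b_def using phieq[OF t(3) t(2)] s sub by blast
    then show "actN \<alpha> a = actP b a" using fx s by simp
  qed
  have "fixes_set (actN \<alpha>) (p ` x)" by (rule agree_fix[OF esA p_conf[OF x] negN[OF t(3)] posP[OF b] ag])
  then have "fixes_set (actN \<alpha>) (p ` x')"
    by (rule neg_fix_ext[OF negN[OF t(3)] p_conf[OF x] p_conf[OF t(2)] _ pos_ext_p[OF t(2) pe]])
  then have "fixes_set (\<phi> \<alpha>) x'" using L t by blast
  then have "\<theta> = Id_on x'" unfolding t(1) fixes_set_def by (intro graph_on_Id) auto
  then show ?thesis by simp
qed

lemma receptive:
  assumes x: "conf \<sigma> x" and y: "conf \<sigma> y" and z: "conf \<sigma> z"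
    and xy: "neg_ext \<sigma> x y" and xz: "neg_ext \<sigma> x z"
    and th: "\<theta> \<in> SS" and dt: "Domain \<theta> = p ` y" and rt: "Range \<theta> = p ` z"
    and bs: "bsub (Id_on (p ` x)) \<theta>"
  shows "\<exists>\<chi>\<in>S_phi \<sigma> N \<phi>. Domain \<chi> = y \<and> Range \<chi> = z \<and> bsub (Id_on x) \<chi> \<and> map_prod p p ` \<chi> = \<theta>"
proof -
  obtain w \<alpha> \<beta> where t: "conf A w" "\<alpha> \<in> carrier N" "\<beta> \<in> carrier P"
      "\<theta> = graph_on (\<lambda>a. actN \<alpha> (actP \<beta> a)) w" using NP_form[OF th] by blast
  have w: "w = p ` y" using dt t(4) by simp
  have sxy: "x \<subseteq> y" using xy unfolding neg_ext_def by auto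
  have eq: "\<theta> \<inter> (p ` x \<times> UNIV) = Id_on (p ` x)" using bs unfolding bsub_def by simp
  have idx: "\<forall>a\<in>p ` x. actN \<alpha> (actP \<beta> a) = a"
  proof
    fix a assume a: "a \<in> p ` x"
    have "(a, actN \<alpha> (actP \<beta> a)) \<in> \<theta>" using a t(4) w sxy by auto
    then have "(a, actN \<alpha> (actP \<beta> a)) \<in> Id_on (p ` x)" using eq a by blast
    then show "actN \<alpha> (actP \<beta> a) = a" by auto
  qed
  have ag: "\<forall>a\<in>p ` x. actN (inv\<^bsub>N\<^esub> \<alpha>) a = actP \<beta> a"
  proof
    fix a assume a: "a \<in> p ` x"
    have ae: "a \<in> evs A" using a conf_sub[OF p_conf[OF x]] by blast
    have "actN \<alpha> (actP \<beta> a) = a" using idx a by blast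
    then have "actN (inv\<^bsub>N\<^esub> \<alpha>) (actN \<alpha> (actP \<beta> a)) = actN (inv\<^bsub>N\<^esub> \<alpha>) a" by simp
    then show "actN (inv\<^bsub>N\<^esub> \<alpha>) a = actP \<beta> a" using Nn.inv1[OF t(2) Pp.inn[OF t(3) ae]] by simp
  qed
  have "fixes_set (actN (inv\<^bsub>N\<^esub> \<alpha>)) (p ` x)"
    by (rule agree_fix[OF esA p_conf[OF x] negN[OF invN_cl[OF t(2)]] posP[OF t(3)] ag])
  then have fbx: "fixes_set (actP \<beta>) (p ` x)" using ag unfolding fixes_set_def by simp
  then have fby: "fixes_set (actP \<beta>) (p ` y)"
    by (rule pos_fix_ext[OF posP[OF t(3)] p_conf[OF x] p_conf[OF y] _ neg_ext_p[OF y xy]])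
  have fax: "fixes_set (actN \<alpha>) (p ` x)" using idx fbx unfolding fixes_set_def by simp
  have th2: "\<theta> = graph_on (actN \<alpha>) (p ` y)" unfolding t(4) w using fby unfolding fixes_set_def
    by (intro graph_on_cong) auto
  have pz: "p ` z = actN \<alpha> ` p ` y" using rt th2 by simp
  have fphi: "fixes_set (\<phi> \<alpha>) x" using L x t(2) fax by blast
  define b where "b = \<phi>b \<alpha> y"
  have b: "b \<in> carrier P" unfolding b_def by (rule phib[OF t(2) y])
  have fbpx: "fixes_set (actP b) (p ` x)" unfolding fixes_set_def
  proof
    fix a assume "a \<in> p ` x"
    then obtain s where s: "s \<in> x" "a = p s" by auto
    have "actP b (p (\<phi> \<alpha> s)) = actN \<alpha> (p s)" unfolding b_def using phieq[OF t(2) y] s sxy by blast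
    then show "actP b a = a" using fphi fax s unfolding fixes_set_def by auto
  qed
  have fbpz: "fixes_set (actP b) (p ` z)"
    by (rule pos_fix_ext[OF posP[OF b] p_conf[OF x] p_conf[OF z] fbpx neg_ext_p[OF z xz]])
  have pphi: "\<forall>s\<in>y. p (\<phi> \<alpha> s) = actN \<alpha> (p s)"
  proof
    fix s assume s: "s \<in> y"
    have inz: "actN \<alpha> (p s) \<in> p ` z" using pz s by blast
    have ie: "actN \<alpha> (p s) \<in> evs A" using inz conf_sub[OF p_conf[OF z]] by blast
    have "actP (inv\<^bsub>P\<^esub> b) (actP b (actN \<alpha> (p s))) = actN \<alpha> (p s)" by (rule Pp.inv1[OF b ie])
    then have "actP (inv\<^bsub>P\<^esub> b) (actN \<alpha> (p s)) = actN \<alpha> (p s)" using fbpz inz unfolding fixes_set_def by simp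
    then show "p (\<phi> \<alpha> s) = actN \<alpha> (p s)" using phi_p[OF t(2) y s] b_def by simp
  qed
  define \<chi> where "\<chi> = graph_on (\<phi> \<alpha>) y"
  have chiS: "\<chi> \<in> S_phi \<sigma> N \<phi>" unfolding \<chi>_def S_phi_def using y t(2) by blast
  have mp: "map_prod p p ` \<chi> = \<theta>" unfolding th2 \<chi>_def graph_on_def using pphi by force
  have py: "p ` (\<phi> \<alpha> ` y) = p ` z" unfolding pz using pphi by (force simp: image_image)
  have cpy: "conf \<sigma> (\<phi> \<alpha> ` y)" by (rule phi_conf[OF t(2) y])
  have xpy: "x \<subseteq> \<phi> \<alpha> ` y" using fphi sxy unfolding fixes_set_def by force
  have sxz: "x \<subseteq> z" using xz unfolding neg_ext_def by auto
  have uq: "\<exists>!y'. conf \<sigma> y' \<and> x \<subseteq> y' \<and> p ` y' = p ` z"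
    by (rule strat_recv[OF x p_conf[OF z] neg_ext_p[OF z xz]])
  then obtain y0 where y0: "\<And>y'. conf \<sigma> y' \<and> x \<subseteq> y' \<and> p ` y' = p ` z \<Longrightarrow> y' = y0"
    by (metis (no_types, lifting))
  have r1: "\<phi> \<alpha> ` y = y0" by (rule y0) (simp add: cpy xpy py)
  have r2: "z = y0" by (rule y0) (simp add: z sxz)
  have rz: "\<phi> \<alpha> ` y = z" using r1 r2 by simp
  have bsx: "bsub (Id_on x) \<chi>"
  proof -
    have "y \<inter> x = x" using sxy by auto
    moreover have "graph_on (\<phi> \<alpha>) x = Id_on x" using fphi unfolding fixes_set_def by (intro graph_on_Id) auto
    ultimately show ?thesis unfolding bsub_def \<chi>_def graph_on_restr using sxy by simp
  qed
  have "Domain \<chi> = y" "Range \<chi> = z" unfolding \<chi>_def using rz by simp_all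
  then show ?thesis using chiS mp bsx by blast
qed

theorem main: "sim_strategy A SS SP SN \<sigma> (S_phi \<sigma> N \<phi>) p"
  unfolding sim_strategy_def
proof (intro conjI allI impI)
  show "thin_cg A SS SP SN" by (rule thin)
  show "is_es \<sigma>" by (rule esS)
  show "iso_family \<sigma> (S_phi \<sigma> N \<phi>)" by (rule Sphi_iso)
  show "es_sym_map \<sigma> (S_phi \<sigma> N \<phi>) A SS p" by (rule sym_map)
  show "is_strategy \<sigma> A p" by (rule strat)
next
  fix x \<theta> assume "conf \<sigma> x \<and> \<theta> \<in> S_phi \<sigma> N \<phi> \<and> bsub_pos \<sigma> (Id_on x) \<theta>"
  then show "\<theta> = Id_on (Domain \<theta>)" by (elim conjE) (rule thinness)
next
  fix x y z \<theta> assume h: "conf \<sigma> x \<and> conf \<sigma> y \<and> conf \<sigma> z \<and> neg_ext \<sigma> x y \<and> neg_ext \<sigma> x z \<and>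
       \<theta> \<in> SS \<and> Domain \<theta> = p ` y \<and> Range \<theta> = p ` z \<and> bsub (Id_on (p ` x)) \<theta>"
  then show "\<exists>\<chi>\<in>S_phi \<sigma> N \<phi>. Domain \<chi> = y \<and> Range \<chi> = z \<and> bsub (Id_on x) \<chi> \<and> map_prod p p ` \<chi> = \<theta>"
    by (elim conjE) (rule receptive; assumption)
qed

end

theorem proposition6p5:
  fixes A :: "'a evstr" and N :: "'n monoid" and P :: "'p monoid"
    and actN :: "'n \<Rightarrow> 'a \<Rightarrow> 'a" and actP :: "'p \<Rightarrow> 'a \<Rightarrow> 'a"
    and lam :: "'n \<Rightarrow> 'p \<Rightarrow> 'p \<times> 'n"
    and \<sigma> :: "'s evstr" and p :: "'s \<Rightarrow> 'a"
    and \<phi> :: "'n \<Rightarrow> 's \<Rightarrow> 's" and \<phi>b :: "'n \<Rightarrow> 's set \<Rightarrow> 'p"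
  assumes "is_game A N actN P actP lam"
    and "uniform_strategy A N actN P actP lam \<sigma> p \<phi> \<phi>b"
    and "\<forall>x \<alpha>. conf \<sigma> x \<and> \<alpha> \<in> carrier N \<and> fixes_set (actN \<alpha>) (p ` x)
           \<longrightarrow> fixes_set (\<phi> \<alpha>) x"
  shows "sim_strategy A
           (comp_closure (S_act A N actN \<union> S_act A P actP))
           (S_act A P actP) (S_act A N actN)
           \<sigma> (S_phi \<sigma> N \<phi>) p"
proof -
  interpret mainctx A N P actN actP lam \<sigma> p \<phi> \<phi>b
    using assms by (rule mainctx.intro)
  show ?thesis by (rule main)
qed

end
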